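(* Let $\lambda\in\mathfrak{h}^*$ and $V=V(\lambda,\mathfrak{b})$ the irreducible $\mathfrak{g}$-module of $\mathfrak{b}$-highest weight $\lambda$, and suppose its dual $V^*$ is generated by a lowest functional $f_-$ of weight $-\lambda$, with $\mathfrak{n}^-_{\mathfrak{b}}f_-=0$ (so $\mathfrak{U}(\mathfrak{b}^-)$ acts on $f_-$ by a character). If $V$ is $\mathfrak{k}$-spherical and $v^{\mathfrak{k}}\in V^{\mathfrak{k}}$ is nonzero, then $\langle v^{\mathfrak{k}},f_-\rangle\neq0$, where $\langle\cdot,\cdot\rangle$ is the canonical pairing.
   Context: Over $\mathbb{C}$, fix $p,q\ge1$, $\mathfrak{g}=\mathfrak{gl}(2p|2q)$; $A_{a,b}=E_{a,b}$ ($1\le a,b\le2p$), $D_{a,b}=E_{2p+a,2p+b}$. $J=\tfrac12\mathrm{diag}(I_p,-I_p,I_q,-I_q)$ and $\mathfrak{k}$ its centralizer ($\cong\mathfrak{gl}(p|q)\oplus\mathfrak{gl}(p|q)$). With $\mathsf{i}=\sqrt{-1}$: $x_i=\mathsf{i}(A_{i,p+i}-A_{p+i,i})$, $x'_i=A_{i,i}+A_{p+i,p+i}$, $y_j=\mathsf{i}(D_{j,q+j}-D_{q+j,j})$, $y'_j=D_{j,j}+D_{q+j,q+j}$; $\mathfrak{h}=\mathrm{span}\{x_i,y_j,x'_i,y'_j\}$, with dual basis $\alpha^B_i,\alpha^F_j,\tau^B_i,\tau^F_j$. $\chi_{\pm i}=\tau^B_i\pm\alpha^B_i$, $\eta_{\pm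 j}=\tau^F_j\pm\alpha^F_j$; $\mathfrak{b}\supseteq\mathfrak{h}$ is the Borel with positive roots $X_r-X_s$ ($r<s$) for the list $(\chi_{+1},..,\chi_{+p},\eta_{+1},..,\eta_{+q},\eta_{-q},..,\eta_{-1},\chi_{-p},..,\chi_{-1})$, $\mathfrak{b}^-=\mathfrak{h}\oplus\mathfrak{n}^-_{\mathfrak{b}}$ the opposite Borel ($\mathfrak{n}^-_{\mathfrak{b}}$ the sum of negative root spaces). One has $\mathfrak{g}=\mathfrak{k}+\mathfrak{b}^-$. A module $V$ is $\mathfrak{k}$-spherical if $V^{\mathfrak{k}}:=\{v:Xv=0\ \forall X\in\mathfrak{k}\}\ne0$; $V^*$ carries the contragredient action. *)

theory Defs
  imports Complex_Main "Jordan_Normal_Form.Matrix"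
begin

text \<open>The Lie superalgebra gl(2p|2q): complex N x N matrices, N = 2p+2q, indices 0-based.
  Index r is odd iff r >= 2p.\<close>

definition dimN :: "nat \<Rightarrow> nat \<Rightarrow> nat" where
  "dimN p q = 2*p + 2*q"

definition idx_odd :: "nat \<Rightarrow> nat \<Rightarrow> bool" where
  "idx_odd p r = (2*p \<le> r)"

definition even_mat :: "nat \<Rightarrow> nat \<Rightarrow> complex mat \<Rightarrow> bool" where
  "even_mat p q X = (X \<in> carrier_mat (dimN p q) (dimN p q) \<and>
     (\<forall>r<dimN p q. \<forall>c<dimN p q. idx_odd p r \<noteq> idx_odd p c \<longrightarrow> X $$ (r,c) = 0))"

definition odd_mat :: "nat \<Rightarrow> nat \<Rightarrow> complex mat \<Rightarrow> bool" where
  "odd_mat p q X = (X \<in> carrier_mat (dimN p q) (dimN p q) \<and>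
     (\<forall>r<dimN p q. \<forall>c<dimN p q. idx_odd p r = idx_odd p c \<longrightarrow> X $$ (r,c) = 0))"

definition hom_mat :: "nat \<Rightarrow> nat \<Rightarrow> bool \<Rightarrow> complex mat \<Rightarrow> bool" where
  "hom_mat p q a X = (if a then odd_mat p q X else even_mat p q X)"

definition even_part :: "nat \<Rightarrow> nat \<Rightarrow> complex mat \<Rightarrow> complex mat" where
  "even_part p q X = mat (dimN p q) (dimN p q)
     (\<lambda>(r,c). if idx_odd p r = idx_odd p c then X $$ (r,c) else 0)"

definition odd_part :: "nat \<Rightarrow> nat \<Rightarrow> complex mat \<Rightarrow> complex mat" where
  "odd_part p q X = mat (dimN p q) (dimN p q)
     (\<lambda>(r,c). if idx_odd p r \<noteq> idx_odd p c then X $$ (r,c) else 0)"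

definition emat :: "nat \<Rightarrow> nat \<Rightarrow> nat \<Rightarrow> complex mat" where
  "emat N a b = mat N N (\<lambda>(r,c). if r = a \<and> c = b then 1 else 0)"

text \<open>Basis of the Cartan subalgebra h (0-based i < p, j < q):
  A_{a,b} = E_{a,b}, D_{a,b} = E_{2p+a,2p+b}.\<close>
definition xB :: "nat \<Rightarrow> nat \<Rightarrow> nat \<Rightarrow> complex mat" where
  "xB p q i = \<i> \<cdot>\<^sub>m (emat (dimN p q) i (p+i) - emat (dimN p q) (p+i) i)"
definition xB' :: "nat \<Rightarrow> nat \<Rightarrow> nat \<Rightarrow> complex mat" where
  "xB' p q i = emat (dimN p q) i i + emat (dimN p q) (p+i) (p+i)"
definition yF :: "nat \<Rightarrow> nat \<Rightarrow> nat \<Rightarrow> complex mat" where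
  "yF p q j = \<i> \<cdot>\<^sub>m (emat (dimN p q) (2*p+j) (2*p+q+j) - emat (dimN p q) (2*p+q+j) (2*p+j))"
definition yF' :: "nat \<Rightarrow> nat \<Rightarrow> nat \<Rightarrow> complex mat" where
  "yF' p q j = emat (dimN p q) (2*p+j) (2*p+j) + emat (dimN p q) (2*p+q+j) (2*p+q+j)"

definition cartan :: "nat \<Rightarrow> nat \<Rightarrow> complex mat set" where
  "cartan p q = {H. \<exists>s t u w. H = mat (dimN p q) (dimN p q) (\<lambda>rc.
      (\<Sum>i<p. s i * (xB p q i $$ rc) + t i * (xB' p q i $$ rc)) +
      (\<Sum>j<q. u j * (yF p q j $$ rc) + w j * (yF' p q j $$ rc)))}"

text \<open>Dual basis alpha^B_i, tau^B_i, alpha^F_j, tau^F_j of h^* (correct on elements of h: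
  coordinates read off from the matrix entries).\<close>
definition alphaB :: "nat \<Rightarrow> nat \<Rightarrow> nat \<Rightarrow> complex mat \<Rightarrow> complex" where
  "alphaB p q i H = - \<i> * H $$ (i, p+i)"
definition tauB :: "nat \<Rightarrow> nat \<Rightarrow> nat \<Rightarrow> complex mat \<Rightarrow> complex" where
  "tauB p q i H = H $$ (i, i)"
definition alphaF :: "nat \<Rightarrow> nat \<Rightarrow> nat \<Rightarrow> complex mat \<Rightarrow> complex" where
  "alphaF p q j H = - \<i> * H $$ (2*p+j, 2*p+q+j)"
definition tauF :: "nat \<Rightarrow> nat \<Rightarrow> nat \<Rightarrow> complex mat \<Rightarrow> complex" where
  "tauF p q j H = H $$ (2*p+j, 2*p+j)"

text \<open>The ordered list (chi_{+1},..,chi_{+p},eta_{+1},..,eta_{+q},eta_{-q},..,eta_{-1},chi_{-p},..,chi_{-1}),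
  entry k (0-based, k < 2p+2q).\<close>
definition wt :: "nat \<Rightarrow> nat \<Rightarrow> nat \<Rightarrow> complex mat \<Rightarrow> complex" where
  "wt p q k H =
    (if k < p then tauB p q k H + alphaB p q k H
     else if k < p + q then tauF p q (k - p) H + alphaF p q (k - p) H
     else if k < p + 2*q then tauF p q (p + 2*q - 1 - k) H - alphaF p q (p + 2*q - 1 - k) H
     else tauB p q (2*p + 2*q - 1 - k) H - alphaB p q (2*p + 2*q - 1 - k) H)"

definition rootsp :: "nat \<Rightarrow> nat \<Rightarrow> (complex mat \<Rightarrow> complex) \<Rightarrow> complex mat set" where
  "rootsp p q \<beta> = {X \<in> carrier_mat (dimN p q) (dimN p q).
      \<forall>H\<in>cartan p q. H * X - X * H = \<beta> H \<cdot>\<^sub>m X}"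

definition pos_root_vec :: "nat \<Rightarrow> nat \<Rightarrow> complex mat \<Rightarrow> bool" where
  "pos_root_vec p q X = (\<exists>r s. r < s \<and> s < dimN p q \<and>
      X \<in> rootsp p q (\<lambda>H. wt p q r H - wt p q s H))"
definition neg_root_vec :: "nat \<Rightarrow> nat \<Rightarrow> complex mat \<Rightarrow> bool" where
  "neg_root_vec p q X = (\<exists>r s. s < r \<and> r < dimN p q \<and>
      X \<in> rootsp p q (\<lambda>H. wt p q r H - wt p q s H))"

definition Jmat :: "nat \<Rightarrow> nat \<Rightarrow> complex mat" where
  "Jmat p q = mat (dimN p q) (dimN p q) (\<lambda>(r,c). if r = c then
      (if r < p \<or> (2*p \<le> r \<and> r < 2*p + q) then 1/2 else -1/2) else 0)"

text \<open>k = centralizer of J (J is even, so the super bracket is the commutator)\<close>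
definition kset :: "nat \<Rightarrow> nat \<Rightarrow> complex mat set" where
  "kset p q = {X \<in> carrier_mat (dimN p q) (dimN p q). Jmat p q * X - X * Jmat p q = 0\<^sub>m (dimN p q) (dimN p q)}"

definition is_subsp :: "(complex \<Rightarrow> 'v \<Rightarrow> 'v) \<Rightarrow> 'v::ab_group_add set \<Rightarrow> bool" where
  "is_subsp sc S = (0 \<in> S \<and> (\<forall>x\<in>S. \<forall>y\<in>S. x + y \<in> S) \<and> (\<forall>c. \<forall>x\<in>S. sc c x \<in> S))"

definition is_lin_fun :: "(complex \<Rightarrow> 'v \<Rightarrow> 'v) \<Rightarrow> ('v::ab_group_add \<Rightarrow> complex) \<Rightarrow> bool" where
  "is_lin_fun sc f = ((\<forall>x y. f (x + y) = f x + f y) \<and> (\<forall>c x. f (sc c x) = c * f x))"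

text \<open>A (Z/2-graded) gl(2p|2q)-module: vector space (type 'v, scalar mult sc),
  grading V = V0 (+) V1, action act.\<close>
definition gmodule :: "nat \<Rightarrow> nat \<Rightarrow> (complex \<Rightarrow> 'v \<Rightarrow> 'v) \<Rightarrow> 'v::ab_group_add set \<Rightarrow> 'v set
     \<Rightarrow> (complex mat \<Rightarrow> 'v \<Rightarrow> 'v) \<Rightarrow> bool" where
  "gmodule p q sc V0 V1 act = (vector_space sc \<and> is_subsp sc V0 \<and> is_subsp sc V1 \<and>
     V0 \<inter> V1 = {0} \<and> (\<forall>v. \<exists>a\<in>V0. \<exists>b\<in>V1. v = a + b) \<and>
     (\<forall>X\<in>carrier_mat (dimN p q) (dimN p q).
        (\<forall>v w. act X (v + w) = act X v + act X w) \<and> (\<forall>c v. act X (sc c v) = sc c (act X v))) \<and>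
     (\<forall>X\<in>carrier_mat (dimN p q) (dimN p q). \<forall>Y\<in>carrier_mat (dimN p q) (dimN p q). \<forall>v.
        act (X + Y) v = act X v + act Y v) \<and>
     (\<forall>X\<in>carrier_mat (dimN p q) (dimN p q). \<forall>c v. act (c \<cdot>\<^sub>m X) v = sc c (act X v)) \<and>
     (\<forall>X. even_mat p q X \<longrightarrow> act X ` V0 \<subseteq> V0 \<and> act X ` V1 \<subseteq> V1) \<and>
     (\<forall>X. odd_mat p q X \<longrightarrow> act X ` V0 \<subseteq> V1 \<and> act X ` V1 \<subseteq> V0) \<and>
     (\<forall>a b X Y v. hom_mat p q a X \<longrightarrow> hom_mat p q b Y \<longrightarrow>
        (let \<sigma> = (if a \<and> b then -1 else 1 :: complex) in
         act (X * Y - \<sigma> \<cdot>\<^sub>m (Y * X)) v = act X (act Y v) - sc \<sigma> (act Y (act X v)))))"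

definition proj0 :: "'v::ab_group_add set \<Rightarrow> 'v set \<Rightarrow> 'v \<Rightarrow> 'v" where
  "proj0 V0 V1 v = (THE a. a \<in> V0 \<and> v - a \<in> V1)"

text \<open>Contragredient action on V^*: (X f)(v) = -(-1)^{|X||f|} f(X v), extended linearly.\<close>
definition dual_act :: "nat \<Rightarrow> nat \<Rightarrow> 'v::ab_group_add set \<Rightarrow> 'v set \<Rightarrow> (complex mat \<Rightarrow> 'v \<Rightarrow> 'v)
     \<Rightarrow> complex mat \<Rightarrow> ('v \<Rightarrow> complex) \<Rightarrow> ('v \<Rightarrow> complex)" where
  "dual_act p q V0 V1 act X f = (\<lambda>v.
      - f (act (even_part p q X) v)
      - f (proj0 V0 V1 (act (odd_part p q X) v))
      + f (act (odd_part p q X) v - proj0 V0 V1 (act (odd_part p q X) v)))"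

inductive_set gen_dual :: "nat \<Rightarrow> nat \<Rightarrow> (complex \<Rightarrow> 'v \<Rightarrow> 'v) \<Rightarrow> 'v::ab_group_add set \<Rightarrow> 'v set
     \<Rightarrow> (complex mat \<Rightarrow> 'v \<Rightarrow> 'v) \<Rightarrow> ('v \<Rightarrow> complex) \<Rightarrow> ('v \<Rightarrow> complex) set"
  for p q sc V0 V1 act f where
  base: "f \<in> gen_dual p q sc V0 V1 act f"
| add: "g \<in> gen_dual p q sc V0 V1 act f \<Longrightarrow> h \<in> gen_dual p q sc V0 V1 act f \<Longrightarrow>
        (\<lambda>v. g v + h v) \<in> gen_dual p q sc V0 V1 act f"
| smult: "g \<in> gen_dual p q sc V0 V1 act f \<Longrightarrow> (\<lambda>v. c * g v) \<in> gen_dual p q sc V0 V1 act f"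
| act: "g \<in> gen_dual p q sc V0 V1 act f \<Longrightarrow> X \<in> carrier_mat (dimN p q) (dimN p q) \<Longrightarrow>
        dual_act p q V0 V1 act X g \<in> gen_dual p q sc V0 V1 act f"

definition irreducible_gmod :: "nat \<Rightarrow> nat \<Rightarrow> (complex \<Rightarrow> 'v \<Rightarrow> 'v) \<Rightarrow> 'v::ab_group_add set \<Rightarrow> 'v set
     \<Rightarrow> (complex mat \<Rightarrow> 'v \<Rightarrow> 'v) \<Rightarrow> bool" where
  "irreducible_gmod p q sc V0 V1 act = ((UNIV :: 'v set) \<noteq> {0} \<and>
     (\<forall>W. is_subsp sc W \<and> (\<forall>X\<in>carrier_mat (dimN p q) (dimN p q). act X ` W \<subseteq> W) \<and>
          (\<forall>w\<in>W. proj0 V0 V1 w \<in> W) \<longrightarrow> W = {0} \<or> W = UNIV))"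

end

theory Submission
  imports Defs
begin



definition fi :: "nat \<Rightarrow> nat \<Rightarrow> nat \<Rightarrow> nat" where
  "fi p q r = (if r < p then r else if r < 2*p then r - p else if r < 2*p+q then r else r - q)"

definition a1 :: "nat \<Rightarrow> nat \<Rightarrow> nat \<Rightarrow> nat" where
  "a1 p q k = (if k < p then k else if k < p+q then 2*p + (k-p)
     else if k < p+2*q then 2*p + (p+2*q-1-k) else 2*p+2*q-1-k)"
definition a2 :: "nat \<Rightarrow> nat \<Rightarrow> nat \<Rightarrow> nat" where
  "a2 p q k = (if k < p then p+k else if k < p+q then 2*p+q+(k-p)
     else if k < p+2*q then 2*p+q+(p+2*q-1-k) else p+(2*p+2*q-1-k))"
definition sg :: "nat \<Rightarrow> nat \<Rightarrow> nat \<Rightarrow> complex" where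
  "sg p q k = (if k < p+q then 1 else -1)"

lemma slot_facts:
  assumes "k < dimN p q"
  shows "a1 p q k < dimN p q" "a2 p q k < dimN p q" "a1 p q k \<noteq> a2 p q k"
    "fi p q (a1 p q k) = a1 p q k" "fi p q (a2 p q k) = a1 p q k"
    "a1 p q (dimN p q - 1 - k) = a1 p q k" "a2 p q (dimN p q - 1 - k) = a2 p q k"
    "sg p q (dimN p q - 1 - k) = - sg p q k"
    "idx_odd p (a2 p q k) = idx_odd p (a1 p q k)"
  using assms by (auto simp: a1_def a2_def fi_def dimN_def sg_def idx_odd_def)

lemma fi_iff:
  assumes "k < dimN p q" "r < dimN p q"
  shows "fi p q r = a1 p q k \<longleftrightarrow> r = a1 p q k \<or> r = a2 p q k"
  using assms by (auto simp: a1_def a2_def fi_def dimN_def)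

lemma fi_facts:
  assumes "r < dimN p q"
  shows "fi p q r < p \<or> (2*p \<le> fi p q r \<and> fi p q r < 2*p+q)"
    "fi p q (fi p q r) = fi p q r" "fi p q r < dimN p q"
    "idx_odd p (fi p q r) = idx_odd p r"
  using assms by (auto simp: fi_def dimN_def idx_odd_def)





lemma sum_single:
  assumes "z < (n::nat)" "\<And>i. i < n \<Longrightarrow> i \<noteq> z \<Longrightarrow> f i = 0"
  shows "(\<Sum>i<n. f i) = (f z :: complex)"
proof -
  have "(\<Sum>i<n. f i) = f z + (\<Sum>i\<in>{..<n}-{z}. f i)"
    using assms(1) by (subst sum.remove[of _ z]) auto
  also have "(\<Sum>i\<in>{..<n}-{z}. f i) = 0" using assms(2) by (intro sum.neutral) auto
  finally show ?thesis by simp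
qed

lemma sum_zero': "(\<And>i. i < (n::nat) \<Longrightarrow> f i = 0) \<Longrightarrow> (\<Sum>i<n. f i) = (0::complex)"
  by (intro sum.neutral) auto

lemma xB_e: "r < dimN p q \<Longrightarrow> c < dimN p q \<Longrightarrow> i < p \<Longrightarrow>
  xB p q i $$ (r,c) = (if r = i \<and> c = p+i then \<i> else if r = p+i \<and> c = i then -\<i> else 0)"
  by (auto simp: xB_def emat_def dimN_def)
lemma xB'_e: "r < dimN p q \<Longrightarrow> c < dimN p q \<Longrightarrow> i < p \<Longrightarrow>
  xB' p q i $$ (r,c) = (if r = i \<and> c = i then 1 else if r = p+i \<and> c = p+i then 1 else 0)"
  by (auto simp: xB'_def emat_def dimN_def)
lemma yF_e: "r < dimN p q \<Longrightarrow> c < dimN p q \<Longrightarrow> j < q \<Longrightarrow>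
  yF p q j $$ (r,c) = (if r = 2*p+j \<and> c = 2*p+q+j then \<i> else if r = 2*p+q+j \<and> c = 2*p+j then -\<i> else 0)"
  by (auto simp: yF_def emat_def dimN_def)
lemma yF'_e: "r < dimN p q \<Longrightarrow> c < dimN p q \<Longrightarrow> j < q \<Longrightarrow>
  yF' p q j $$ (r,c) = (if r = 2*p+j \<and> c = 2*p+j then 1 else if r = 2*p+q+j \<and> c = 2*p+q+j then 1 else 0)"
  by (auto simp: yF'_def emat_def dimN_def)

definition hval :: "nat \<Rightarrow> nat \<Rightarrow> (nat \<Rightarrow> complex) \<Rightarrow> (nat \<Rightarrow> complex) \<Rightarrow> nat \<Rightarrow> nat \<Rightarrow> complex" where
  "hval p q d s r c = (if fi p q r = fi p q c then (if r = c then d (fi p q r)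
      else if r = fi p q r then \<i> * s (fi p q r) else - \<i> * s (fi p q r)) else 0)"

definition csum where
  "csum p q s t u w = (\<lambda>rc.
      (\<Sum>i<p. s i * (xB p q i $$ rc) + t i * (xB' p q i $$ rc)) +
      (\<Sum>j<q. u j * (yF p q j $$ rc) + w j * (yF' p q j $$ rc)))"

lemma fiA: "r < p \<Longrightarrow> c < dimN p q \<Longrightarrow> fi p q r = r \<and> (fi p q c = r \<longleftrightarrow> c = r \<or> c = p + r)"
  by (auto simp: fi_def dimN_def)
lemma fiB: "p \<le> r \<Longrightarrow> r < 2*p \<Longrightarrow> c < dimN p q \<Longrightarrow> fi p q r = r - p \<and> (fi p q c = r - p \<longleftrightarrow> c = r \<or> c = r - p)"
  by (auto simp: fi_def dimN_def)
lemma fiC: "2*p \<le> r \<Longrightarrow> r < 2*p+q \<Longrightarrow> c < dimN p q \<Longrightarrow> fi p q r = r \<and> (fi p q c = r \<longleftrightarrow> c = r \<or> c = r + q)"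
  by (auto simp: fi_def dimN_def)
lemma fiD: "2*p+q \<le> r \<Longrightarrow> r < dimN p q \<Longrightarrow> c < dimN p q \<Longrightarrow> fi p q r = r - q \<and> (fi p q c = r - q \<longleftrightarrow> c = r \<or> c = r - q)"
  by (auto simp: fi_def dimN_def)

lemma csum_B:
  assumes r: "r < dimN p q" and c: "c < dimN p q"
  shows "(\<Sum>i<p. s i * (xB p q i $$ (r,c)) + t i * (xB' p q i $$ (r,c))) =
     (if r < 2*p \<and> fi p q r = fi p q c then (if r = c then t (fi p q r)
      else if r = fi p q r then \<i> * s (fi p q r) else - \<i> * s (fi p q r)) else 0)"
proof (cases "r < 2*p")
  case True
  have z: "fi p q r < p" using True by (auto simp add: fi_def)
  have "(\<Sum>i<p. s i * (xB p q i $$ (r,c)) + t i * (xB' p q i $$ (r,c))) =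
     s (fi p q r) * (xB p q (fi p q r) $$ (r,c)) + t (fi p q r) * (xB' p q (fi p q r) $$ (r,c))"
  proof (rule sum_single[OF z])
    fix i assume "i < p" "i \<noteq> fi p q r"
    then show "s i * (xB p q i $$ (r,c)) + t i * (xB' p q i $$ (r,c)) = 0"
      using True r c by (simp add: xB_e xB'_e) (auto simp: fi_def)
  qed
  also have "\<dots> = (if fi p q r = fi p q c then (if r = c then t (fi p q r)
      else if r = fi p q r then \<i> * s (fi p q r) else - \<i> * s (fi p q r)) else 0)"
  proof (cases "r < p")
    case True
    have f: "fi p q r = r" "fi p q c = r \<longleftrightarrow> c = r \<or> c = p + r" using fiA[OF True c] by auto
    have e1: "xB p q r $$ (r,c) = (if c = p + r then \<i> else 0)"
      using xB_e[OF r c True] by auto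
    have e2: "xB' p q r $$ (r,c) = (if c = r then 1 else 0)"
      using xB'_e[OF r c True] by auto
    have f3: "r = fi p q c \<longleftrightarrow> c = r \<or> c = p + r" using f(2) by auto
    show ?thesis unfolding f(1) e1 e2 using True f3 by (cases "c = r"; cases "c = p + r") auto
  next
    case False
    define i where "i = r - p"
    have ri: "r = p + i" "i < p" using False \<open>r < 2*p\<close> by (auto simp: i_def)
    have f: "fi p q r = i" "fi p q c = i \<longleftrightarrow> c = r \<or> c = i" using fiB[of p r c q] False \<open>r < 2*p\<close> c ri by auto
    have e1: "xB p q i $$ (r,c) = (if c = i then - \<i> else 0)"
      using xB_e[OF r c ri(2)] ri by auto
    have e2: "xB' p q i $$ (r,c) = (if c = r then 1 else 0)"
      using xB'_e[OF r c ri(2)] ri by auto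
    have ne: "r \<noteq> i" using ri False by simp
    have f3: "i = fi p q c \<longleftrightarrow> c = r \<or> c = i" using f(2) by auto
    show ?thesis unfolding f(1) e1 e2 using ne f3 by (cases "c = r"; cases "c = i") auto
  qed
  finally show ?thesis using True by simp
next
  case False
  show ?thesis
    apply (subst sum_zero')
    using False r c by (simp_all add: xB_e xB'_e)
qed

lemma csum_F:
  assumes r: "r < dimN p q" and c: "c < dimN p q"
  shows "(\<Sum>j<q. u j * (yF p q j $$ (r,c)) + w j * (yF' p q j $$ (r,c))) =
     (if 2*p \<le> r \<and> fi p q r = fi p q c then (if r = c then w (fi p q r - 2*p)
      else if r = fi p q r then \<i> * u (fi p q r - 2*p) else - \<i> * u (fi p q r - 2*p)) else 0)"
proof (cases "2*p \<le> r")
  case True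
  have z: "fi p q r - 2*p < q" using True r by (auto simp add: fi_def dimN_def)
  have "(\<Sum>j<q. u j * (yF p q j $$ (r,c)) + w j * (yF' p q j $$ (r,c))) =
     u (fi p q r - 2*p) * (yF p q (fi p q r - 2*p) $$ (r,c)) + w (fi p q r - 2*p) * (yF' p q (fi p q r - 2*p) $$ (r,c))"
  proof (rule sum_single[OF z])
    fix i assume "i < q" "i \<noteq> fi p q r - 2*p"
    then show "u i * (yF p q i $$ (r,c)) + w i * (yF' p q i $$ (r,c)) = 0"
      using True r c by (simp add: yF_e yF'_e) (auto simp: fi_def)
  qed
  also have "\<dots> = (if fi p q r = fi p q c then (if r = c then w (fi p q r - 2*p)
      else if r = fi p q r then \<i> * u (fi p q r - 2*p) else - \<i> * u (fi p q r - 2*p)) else 0)"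
  proof (cases "r < 2*p+q")
    case True
    define j where "j = r - 2*p"
    have rj: "r = 2*p + j" "j < q" using True \<open>2*p \<le> r\<close> by (auto simp: j_def)
    have f: "fi p q r = r" "fi p q c = r \<longleftrightarrow> c = r \<or> c = r + q" using fiC[OF \<open>2*p \<le> r\<close> True c] by auto
    have fj: "fi p q r - 2*p = j" using f rj by simp
    have e1: "yF p q j $$ (r,c) = (if c = r + q then \<i> else 0)"
      using yF_e[OF r c rj(2)] rj by auto
    have e2: "yF' p q j $$ (r,c) = (if c = r then 1 else 0)"
      using yF'_e[OF r c rj(2)] rj by auto
    have f3: "r = fi p q c \<longleftrightarrow> c = r \<or> c = r + q" using f(2) by auto
    have ne: "r \<noteq> r + q" using rj by simp
    show ?thesis unfolding fj unfolding e1 e2 f(1) using f3 ne by (cases "c = r"; cases "c = r + q") auto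
  next
    case False
    define j where "j = r - 2*p - q"
    have rj: "r = 2*p + q + j" "j < q" using False r by (auto simp: j_def dimN_def)
    have f: "fi p q r = r - q" "fi p q c = r - q \<longleftrightarrow> c = r \<or> c = r - q" using fiD[of p q r c] False r c by auto
    have fj: "fi p q r - 2*p = j" using f rj by simp
    have e1: "yF p q j $$ (r,c) = (if c = r - q then - \<i> else 0)"
      using yF_e[OF r c rj(2)] rj by auto
    have e2: "yF' p q j $$ (r,c) = (if c = r then 1 else 0)"
      using yF'_e[OF r c rj(2)] rj by auto
    have ne: "r \<noteq> r - q" using rj by simp
    have f3: "r - q = fi p q c \<longleftrightarrow> c = r \<or> c = r - q" using f(2) by auto
    show ?thesis unfolding fj unfolding e1 e2 f(1) using f3 ne by (cases "c = r"; cases "c = r - q") auto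
  qed
  finally show ?thesis using True by simp
next
  case False
  show ?thesis
    apply (subst sum_zero')
    using False r c by (simp_all add: yF_e yF'_e)
qed

lemma csum_entry:
  assumes r: "r < dimN p q" and c: "c < dimN p q"
  shows "csum p q s t u w (r,c) = hval p q (\<lambda>i. if i < p then t i else w (i - 2*p))
            (\<lambda>i. if i < p then s i else u (i - 2*p)) r c"
proof -
  have f1: "r < 2*p \<Longrightarrow> fi p q r < p" and f2: "\<not> r < 2*p \<Longrightarrow> \<not> fi p q r < p"
    by (auto simp: fi_def)
  show ?thesis
  proof (cases "r < 2*p")
    case True
    have d: "(if fi p q r < p then t (fi p q r) else w (fi p q r - 2*p)) = t (fi p q r)"
      "(if fi p q r < p then s (fi p q r) else u (fi p q r - 2*p)) = s (fi p q r)" using f1[OF True] by auto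
    show ?thesis unfolding csum_def csum_B[OF r c] csum_F[OF r c] hval_def d using True by simp
  next
    case False
    have d: "(if fi p q r < p then t (fi p q r) else w (fi p q r - 2*p)) = w (fi p q r - 2*p)"
      "(if fi p q r < p then s (fi p q r) else u (fi p q r - 2*p)) = u (fi p q r - 2*p)" using f2[OF False] by auto
    show ?thesis unfolding csum_def csum_B[OF r c] csum_F[OF r c] hval_def d using False by simp
  qed
qed




lemma cartan_form:
  assumes "H \<in> cartan p q"
  shows "H \<in> carrier_mat (dimN p q) (dimN p q) \<and>
     (\<exists>d s. \<forall>r<dimN p q. \<forall>c<dimN p q. H $$ (r,c) = hval p q d s r c)"
proof -
  obtain s t u w where H: "H = mat (dimN p q) (dimN p q) (\<lambda>rc.
      (\<Sum>i<p. s i * (xB p q i $$ rc) + t i * (xB' p q i $$ rc)) +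
      (\<Sum>j<q. u j * (yF p q j $$ rc) + w j * (yF' p q j $$ rc)))"
    using assms unfolding cartan_def by blast
  have "\<forall>r<dimN p q. \<forall>c<dimN p q. H $$ (r,c) = hval p q (\<lambda>i. if i < p then t i else w (i - 2*p))
            (\<lambda>i. if i < p then s i else u (i - 2*p)) r c"
    using csum_entry[where p=p and q=q and s=s and t=t and u=u and w=w] unfolding H csum_def by simp
  then show ?thesis unfolding H by auto
qed

definition uu :: "nat \<Rightarrow> nat \<Rightarrow> nat \<Rightarrow> nat \<Rightarrow> complex" where
  "uu p q k r = (if r = a1 p q k then 1 else if r = a2 p q k then - sg p q k * \<i> else 0)"
definition ww :: "nat \<Rightarrow> nat \<Rightarrow> nat \<Rightarrow> nat \<Rightarrow> complex" where
  "ww p q k r = (if r = a1 p q k then 1/2 else if r = a2 p q k then sg p q k * \<i> / 2 else 0)"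
definition RR :: "nat \<Rightarrow> nat \<Rightarrow> nat \<Rightarrow> nat \<Rightarrow> complex mat" where
  "RR p q k l = mat (dimN p q) (dimN p q) (\<lambda>(r,c). uu p q k r * ww p q l c)"

lemma sg_sq: "sg p q k * sg p q k = 1" "sg p q k = 1 \<or> sg p q k = -1"
  by (auto simp: sg_def)

lemma sum_uu:
  assumes k: "k < dimN p q"
  shows "(\<Sum>m<dimN p q. f m * uu p q k m) = f (a1 p q k) - sg p q k * \<i> * f (a2 p q k)"
proof -
  have "(\<Sum>m<dimN p q. f m * uu p q k m) = (\<Sum>m<dimN p q. (if m = a1 p q k then f m else 0)
     + (if m = a2 p q k then - sg p q k * \<i> * f m else 0))"
    using slot_facts(3)[OF k] by (intro sum.cong) (auto simp: uu_def)
  also have "\<dots> = f (a1 p q k) - sg p q k * \<i> * f (a2 p q k)"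
    using slot_facts(1,2)[OF k] by (simp add: sum.distrib)
  finally show ?thesis .
qed

lemma sum_ww:
  assumes k: "k < dimN p q"
  shows "(\<Sum>m<dimN p q. ww p q k m * f m) = f (a1 p q k) / 2 + sg p q k * \<i> / 2 * f (a2 p q k)"
proof -
  have "(\<Sum>m<dimN p q. ww p q k m * f m) = (\<Sum>m<dimN p q. (if m = a1 p q k then f m / 2 else 0)
     + (if m = a2 p q k then sg p q k * \<i> / 2 * f m else 0))"
    using slot_facts(3)[OF k] by (intro sum.cong) (auto simp: ww_def)
  also have "\<dots> = f (a1 p q k) / 2 + sg p q k * \<i> / 2 * f (a2 p q k)"
    using slot_facts(1,2)[OF k] by (simp add: sum.distrib)
  finally show ?thesis .
qed

lemma wt_eq:
  assumes k: "k < dimN p q"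
  shows "wt p q k H = H $$ (a1 p q k, a1 p q k) - sg p q k * \<i> * H $$ (a1 p q k, a2 p q k)"
  using k by (auto simp: wt_def a1_def a2_def sg_def tauB_def alphaB_def tauF_def alphaF_def dimN_def)

lemma hval_a:
  assumes k: "k < dimN p q"
  shows "hval p q d s (a1 p q k) (a1 p q k) = d (a1 p q k)"
    "hval p q d s (a2 p q k) (a2 p q k) = d (a1 p q k)"
    "hval p q d s (a1 p q k) (a2 p q k) = \<i> * s (a1 p q k)"
    "hval p q d s (a2 p q k) (a1 p q k) = - \<i> * s (a1 p q k)"
  using slot_facts[OF k] by (auto simp: hval_def)

lemma hval_out:
  assumes k: "k < dimN p q" and r: "r < dimN p q" "r \<noteq> a1 p q k" "r \<noteq> a2 p q k"
  shows "hval p q d s r (a1 p q k) = 0" "hval p q d s r (a2 p q k) = 0"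
    "hval p q d s (a1 p q k) r = 0" "hval p q d s (a2 p q k) r = 0"
  using slot_facts[OF k] fi_iff[OF k r(1)] r by (auto simp: hval_def)

lemma H_uu:
  assumes H: "H \<in> cartan p q" and k: "k < dimN p q" and r: "r < dimN p q"
  shows "(\<Sum>m<dimN p q. H $$ (r,m) * uu p q k m) = wt p q k H * uu p q k r"
proof -
  obtain d s where hs: "\<forall>r<dimN p q. \<forall>c<dimN p q. H $$ (r,c) = hval p q d s r c"
    using cartan_form[OF H] by blast
  note sf = slot_facts[OF k]
  show ?thesis
    unfolding sum_uu[OF k] wt_eq[OF k] using hs sf r hval_a[OF k, of d s] hval_out[OF k r, of d s] sg_sq[of p q k]
    by (cases "r = a1 p q k"; cases "r = a2 p q k") (auto simp: uu_def algebra_simps)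
qed

lemma ww_H:
  assumes H: "H \<in> cartan p q" and k: "k < dimN p q" and c: "c < dimN p q"
  shows "(\<Sum>m<dimN p q. ww p q k m * H $$ (m,c)) = wt p q k H * ww p q k c"
proof -
  obtain d s where hs: "\<forall>r<dimN p q. \<forall>c<dimN p q. H $$ (r,c) = hval p q d s r c"
    using cartan_form[OF H] by blast
  note sf = slot_facts[OF k]
  show ?thesis
    unfolding sum_ww[OF k] wt_eq[OF k] using hs sf c hval_a[OF k, of d s] hval_out[OF k c, of d s] sg_sq[of p q k]
    by (cases "c = a1 p q k"; cases "c = a2 p q k") (auto simp: ww_def algebra_simps)
qed




lemma mult_entry:
  assumes "A \<in> carrier_mat n n" "B \<in> carrier_mat n n" "i < n" "j < n"
  shows "(A * B) $$ (i,j) = (\<Sum>m<n. A $$ (i,m) * B $$ (m,j))"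
  using assms by (auto simp: scalar_prod_def atLeast0LessThan intro!: sum.cong)

lemma RR_carrier[simp]: "RR p q k l \<in> carrier_mat (dimN p q) (dimN p q)"
  by (simp add: RR_def)

lemma RR_dims[simp]: "dim_row (RR p q k l) = dimN p q" "dim_col (RR p q k l) = dimN p q"
  by (simp_all add: RR_def)

lemma RR_entry: "r < dimN p q \<Longrightarrow> c < dimN p q \<Longrightarrow> RR p q k l $$ (r,c) = uu p q k r * ww p q l c"
  by (simp add: RR_def)

lemma RR_root:
  assumes k: "k < dimN p q" and l: "l < dimN p q"
  shows "RR p q k l \<in> rootsp p q (\<lambda>H. wt p q k H - wt p q l H)"
  unfolding rootsp_def
proof (intro CollectI conjI ballI RR_carrier)
  fix H assume H: "H \<in> cartan p q"
  have Hc: "H \<in> carrier_mat (dimN p q) (dimN p q)" using cartan_form[OF H] by blast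
  show "H * RR p q k l - RR p q k l * H = (wt p q k H - wt p q l H) \<cdot>\<^sub>m RR p q k l"
  proof (rule eq_matI)
    fix i j assume "i < dim_row ((wt p q k H - wt p q l H) \<cdot>\<^sub>m RR p q k l)"
       "j < dim_col ((wt p q k H - wt p q l H) \<cdot>\<^sub>m RR p q k l)"
    then have i: "i < dimN p q" and j: "j < dimN p q" by auto
    have 1: "(H * RR p q k l) $$ (i,j) = wt p q k H * uu p q k i * ww p q l j"
    proof -
      have "(H * RR p q k l) $$ (i,j) = (\<Sum>m<dimN p q. H $$ (i,m) * uu p q k m) * ww p q l j"
        unfolding mult_entry[OF Hc RR_carrier i j] using i j by (simp add: RR_entry sum_distrib_right mult.assoc)
      then show ?thesis using H_uu[OF H k i] by simp
    qed
    have 2: "(RR p q k l * H) $$ (i,j) = uu p q k i * (wt p q l H * ww p q l j)"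
    proof -
      have "(RR p q k l * H) $$ (i,j) = uu p q k i * (\<Sum>m<dimN p q. ww p q l m * H $$ (m,j))"
        unfolding mult_entry[OF RR_carrier Hc i j] using i j by (simp add: RR_entry sum_distrib_left mult.assoc)
      then show ?thesis using ww_H[OF H l j] by simp
    qed
    show "(H * RR p q k l - RR p q k l * H) $$ (i,j) = ((wt p q k H - wt p q l H) \<cdot>\<^sub>m RR p q k l) $$ (i,j)"
      using i j Hc 1 2 by (simp add: RR_entry algebra_simps)
  qed (use Hc in auto)
qed

lemma RR_neg: "l < k \<Longrightarrow> k < dimN p q \<Longrightarrow> neg_root_vec p q (RR p q k l)"
proof -
  assume a: "l < k" "k < dimN p q"
  have "RR p q k l \<in> rootsp p q (\<lambda>H. wt p q k H - wt p q l H)" by (rule RR_root) (use a in auto)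
  then show ?thesis unfolding neg_root_vec_def using a by blast
qed

lemma RR_pos: "k < l \<Longrightarrow> l < dimN p q \<Longrightarrow> pos_root_vec p q (RR p q k l)"
proof -
  assume a: "k < l" "l < dimN p q"
  have "RR p q k l \<in> rootsp p q (\<lambda>H. wt p q k H - wt p q l H)" by (rule RR_root) (use a in auto)
  then show ?thesis unfolding pos_root_vec_def using a by blast
qed

lemma uu_supp: "k < dimN p q \<Longrightarrow> uu p q k r \<noteq> 0 \<Longrightarrow> idx_odd p r = idx_odd p (a1 p q k)"
  using slot_facts(9) by (auto simp: uu_def split: if_splits)
lemma ww_supp: "k < dimN p q \<Longrightarrow> ww p q k r \<noteq> 0 \<Longrightarrow> idx_odd p r = idx_odd p (a1 p q k)"
  using slot_facts(9) by (auto simp: ww_def split: if_splits)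

lemma RR_even: "k < dimN p q \<Longrightarrow> l < dimN p q \<Longrightarrow> idx_odd p (a1 p q k) = idx_odd p (a1 p q l) \<Longrightarrow>
   even_mat p q (RR p q k l)"
  unfolding even_mat_def using uu_supp ww_supp by (auto simp: RR_entry)

lemma RR_odd: "k < dimN p q \<Longrightarrow> l < dimN p q \<Longrightarrow> idx_odd p (a1 p q k) \<noteq> idx_odd p (a1 p q l) \<Longrightarrow>
   odd_mat p q (RR p q k l)"
  unfolding odd_mat_def using uu_supp ww_supp by (auto simp: RR_entry)




lemma RR_diag_cartan:
  assumes k: "k < dimN p q"
  shows "RR p q k k \<in> cartan p q"
proof -
  define s where "s = (\<lambda>i. if i = a1 p q k then sg p q k / 2 else 0)"
  define t where "t = (\<lambda>i. if i = a1 p q k then 1/2 else (0::complex))"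
  define u where "u = (\<lambda>j. if 2*p + j = a1 p q k then sg p q k / 2 else 0)"
  define w where "w = (\<lambda>j. if 2*p + j = a1 p q k then 1/2 else (0::complex))"
  have "RR p q k k = mat (dimN p q) (dimN p q) (csum p q s t u w)"
  proof (rule eq_matI)
    fix r c assume "r < dim_row (mat (dimN p q) (dimN p q) (csum p q s t u w))"
      "c < dim_col (mat (dimN p q) (dimN p q) (csum p q s t u w))"
    then have r: "r < dimN p q" and c: "c < dimN p q" by auto
    note sf = slot_facts[OF k]
    have fr: "fi p q r < p \<or> 2*p \<le> fi p q r" using fi_facts(1)[OF r] by auto
    have d: "(if fi p q r < p then t (fi p q r) else w (fi p q r - 2*p)) = (if fi p q r = a1 p q k then 1/2 else 0)"
      using fr by (auto simp: t_def w_def)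
    have e: "(if fi p q r < p then s (fi p q r) else u (fi p q r - 2*p)) = (if fi p q r = a1 p q k then sg p q k/2 else 0)"
      using fr by (auto simp: s_def u_def)
    have "csum p q s t u w (r,c) = uu p q k r * ww p q k c"
      unfolding csum_entry[OF r c] hval_def d e
      using fi_iff[OF k r] fi_iff[OF k c] sf sg_sq[of p q k]
      by (auto simp: uu_def ww_def)
    then show "RR p q k k $$ (r,c) = mat (dimN p q) (dimN p q) (csum p q s t u w) $$ (r,c)"
      using r c by (simp add: RR_entry)
  qed auto
  then show ?thesis unfolding cartan_def csum_def by blast
qed

definition jv :: "nat \<Rightarrow> nat \<Rightarrow> nat \<Rightarrow> complex" where
  "jv p q r = (if r < p \<or> (2*p \<le> r \<and> r < 2*p + q) then 1/2 else -1/2)"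

lemma Jmat_entry: "r < dimN p q \<Longrightarrow> c < dimN p q \<Longrightarrow> Jmat p q $$ (r,c) = (if r = c then jv p q r else 0)"
  by (simp add: Jmat_def jv_def)

lemma jv_fi: "r < dimN p q \<Longrightarrow> jv p q r = (if fi p q r = r then 1/2 else -1/2)"
  by (auto simp: jv_def fi_def dimN_def)

lemma J_mult_left: "M \<in> carrier_mat (dimN p q) (dimN p q) \<Longrightarrow> r < dimN p q \<Longrightarrow> c < dimN p q \<Longrightarrow>
   (Jmat p q * M) $$ (r,c) = jv p q r * M $$ (r,c)"
proof -
  assume M: "M \<in> carrier_mat (dimN p q) (dimN p q)" and r: "r < dimN p q" and c: "c < dimN p q"
  have "(Jmat p q * M) $$ (r,c) = (\<Sum>m<dimN p q. Jmat p q $$ (r,m) * M $$ (m,c))"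
    using M r c by (intro mult_entry) (auto simp: Jmat_def)
  also have "\<dots> = (\<Sum>m<dimN p q. if m = r then jv p q r * M $$ (m,c) else 0)"
    using r by (intro sum.cong) (auto simp: Jmat_entry)
  finally show ?thesis using r by simp
qed

lemma J_mult_right: "M \<in> carrier_mat (dimN p q) (dimN p q) \<Longrightarrow> r < dimN p q \<Longrightarrow> c < dimN p q \<Longrightarrow>
   (M * Jmat p q) $$ (r,c) = M $$ (r,c) * jv p q c"
proof -
  assume M: "M \<in> carrier_mat (dimN p q) (dimN p q)" and r: "r < dimN p q" and c: "c < dimN p q"
  have "(M * Jmat p q) $$ (r,c) = (\<Sum>m<dimN p q. M $$ (r,m) * Jmat p q $$ (m,c))"
    using M r c by (intro mult_entry) (auto simp: Jmat_def)
  also have "\<dots> = (\<Sum>m<dimN p q. if m = c then M $$ (r,m) * jv p q c else 0)"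
    using c by (intro sum.cong) (auto simp: Jmat_entry)
  finally show ?thesis using c by simp
qed

lemma uu_bar: "k < dimN p q \<Longrightarrow> r < dimN p q \<Longrightarrow>
   uu p q (dimN p q - 1 - k) r = (if fi p q r = r then 1 else -1) * uu p q k r"
  using slot_facts[of k p q] by (auto simp: uu_def)
lemma ww_bar: "k < dimN p q \<Longrightarrow> r < dimN p q \<Longrightarrow>
   ww p q (dimN p q - 1 - k) r = (if fi p q r = r then 1 else -1) * ww p q k r"
  using slot_facts[of k p q] by (auto simp: ww_def)

lemma RR_kset:
  assumes k: "k < dimN p q" and l: "l < dimN p q"
  shows "RR p q k l + RR p q (dimN p q - 1 - k) (dimN p q - 1 - l) \<in> kset p q"
  unfolding kset_def
proof (intro CollectI conjI)
  let ?M = "RR p q k l + RR p q (dimN p q - 1 - k) (dimN p q - 1 - l)"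
  show Mc: "?M \<in> carrier_mat (dimN p q) (dimN p q)" by simp
  show "Jmat p q * ?M - ?M * Jmat p q = 0\<^sub>m (dimN p q) (dimN p q)"
  proof (rule eq_matI)
    fix i j assume "i < dim_row (0\<^sub>m (dimN p q) (dimN p q) :: complex mat)"
      "j < dim_col (0\<^sub>m (dimN p q) (dimN p q) :: complex mat)"
    then have i: "i < dimN p q" and j: "j < dimN p q" by auto
    show "(Jmat p q * ?M - ?M * Jmat p q) $$ (i,j) = 0\<^sub>m (dimN p q) (dimN p q) $$ (i,j)"
    proof -
      have e: "(Jmat p q * ?M - ?M * Jmat p q) $$ (i,j) = (Jmat p q * ?M) $$ (i,j) - (?M * Jmat p q) $$ (i,j)"
        using i j by (intro index_minus_mat) (auto simp: Jmat_def)
      have m: "?M $$ (i,j) = uu p q k i * ww p q l j * (1 + (if fi p q i = i then 1 else -1) * (if fi p q j = j then 1 else -1))"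
        using i j uu_bar[OF k i] ww_bar[OF l j]
        by (cases "fi p q i = i"; cases "fi p q j = j") (simp_all add: RR_entry)
      show ?thesis unfolding e J_mult_left[OF Mc i j] J_mult_right[OF Mc i j] m jv_fi[OF i] jv_fi[OF j]
        using i j by (cases "fi p q i = i"; cases "fi p q j = j") simp_all
    qed
  qed (auto simp: Jmat_def)
qed




inductive_set mspan :: "nat \<Rightarrow> complex mat set \<Rightarrow> complex mat set" for n S where
  mzero: "0\<^sub>m n n \<in> mspan n S"
| mgen: "X \<in> S \<Longrightarrow> X \<in> mspan n S"
| madd: "X \<in> mspan n S \<Longrightarrow> Y \<in> mspan n S \<Longrightarrow> X + Y \<in> mspan n S"
| msmul: "X \<in> mspan n S \<Longrightarrow> c \<cdot>\<^sub>m X \<in> mspan n S"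

lemma mspan_trans: assumes "S \<subseteq> mspan n T" "X \<in> mspan n S" shows "X \<in> mspan n T"
  using assms(2) by (induction rule: mspan.induct) (use assms(1) in \<open>auto intro: mspan.intros\<close>)

definition sl :: "nat \<Rightarrow> nat \<Rightarrow> nat \<Rightarrow> nat" where
  "sl p q r = (if fi p q r < p then fi p q r else fi p q r - p)"

lemma sl_facts: "r < dimN p q \<Longrightarrow> sl p q r < dimN p q \<and> a1 p q (sl p q r) = fi p q r \<and>
    (r = a1 p q (sl p q r) \<or> r = a2 p q (sl p q r))"
  by (auto simp: sl_def fi_def a1_def a2_def dimN_def)

lemma complete_uw:
  assumes r: "r < dimN p q" and i: "i < dimN p q"
  shows "uu p q (sl p q r) i * ww p q (sl p q r) r
     + uu p q (dimN p q - 1 - sl p q r) i * ww p q (dimN p q - 1 - sl p q r) r = (if i = r then 1 else 0)"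
proof -
  define k where "k = sl p q r"
  have k: "k < dimN p q" and rk: "r = a1 p q k \<or> r = a2 p q k" using sl_facts[OF r] by (auto simp: k_def)
  note sf = slot_facts[OF k]
  show ?thesis unfolding k_def[symmetric] using rk sf sg_sq[of p q k]
    by (auto simp: uu_def ww_def field_simps)
qed

lemma complete_uw':
  assumes r: "r < dimN p q" and i: "i < dimN p q"
  shows "uu p q (sl p q r) r * ww p q (sl p q r) i
     + uu p q (dimN p q - 1 - sl p q r) r * ww p q (dimN p q - 1 - sl p q r) i = (if i = r then 1 else 0)"
proof -
  define k where "k = sl p q r"
  have k: "k < dimN p q" and rk: "r = a1 p q k \<or> r = a2 p q k" using sl_facts[OF r] by (auto simp: k_def)
  note sf = slot_facts[OF k]
  show ?thesis unfolding k_def[symmetric] using rk sf sg_sq[of p q k]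
    by (auto simp: uu_def ww_def field_simps)
qed

lemma emat_RR:
  assumes r: "r < dimN p q" and c: "c < dimN p q"
  shows "emat (dimN p q) r c \<in> mspan (dimN p q) {RR p q k l |k l. k < dimN p q \<and> l < dimN p q}"
proof -
  define k1 where "k1 = sl p q r"
  define k2 where "k2 = dimN p q - 1 - sl p q r"
  define l1 where "l1 = sl p q c"
  define l2 where "l2 = dimN p q - 1 - sl p q c"
  let ?S = "{RR p q k l |k l. k < dimN p q \<and> l < dimN p q}"
  have ks: "k1 < dimN p q" "k2 < dimN p q" "l1 < dimN p q" "l2 < dimN p q"
    using sl_facts[OF r] sl_facts[OF c] by (auto simp: k1_def k2_def l1_def l2_def)
  have g: "\<And>k l. k < dimN p q \<Longrightarrow> l < dimN p q \<Longrightarrow> x \<cdot>\<^sub>m RR p q k l \<in> mspan (dimN p q) ?S" for x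
    by (rule msmul, rule mgen) blast
  define E where "E = (ww p q k1 r * uu p q l1 c) \<cdot>\<^sub>m RR p q k1 l1 + (ww p q k1 r * uu p q l2 c) \<cdot>\<^sub>m RR p q k1 l2
    + (ww p q k2 r * uu p q l1 c) \<cdot>\<^sub>m RR p q k2 l1 + (ww p q k2 r * uu p q l2 c) \<cdot>\<^sub>m RR p q k2 l2"
  have "E \<in> mspan (dimN p q) ?S" unfolding E_def using ks by (intro madd g)
  moreover have "emat (dimN p q) r c = E"
  proof (rule eq_matI)
    fix i j assume "i < dim_row E" "j < dim_col E"
    then have i: "i < dimN p q" and j: "j < dimN p q" by (auto simp: E_def)
    have "E $$ (i,j) = (uu p q k1 i * ww p q k1 r + uu p q k2 i * ww p q k2 r) *
        (uu p q l1 c * ww p q l1 j + uu p q l2 c * ww p q l2 j)"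
      using i j by (simp add: E_def RR_entry algebra_simps)
    also have "\<dots> = (if i = r then 1 else 0) * (if j = c then 1 else 0)"
      unfolding k1_def k2_def l1_def l2_def complete_uw[OF r i] complete_uw'[OF c j] ..
    finally show "emat (dimN p q) r c $$ (i,j) = E $$ (i,j)" using i j by (simp add: emat_def)
  qed (auto simp: E_def emat_def)
  ultimately show ?thesis by simp
qed

definition psum :: "nat \<Rightarrow> complex mat \<Rightarrow> nat \<Rightarrow> complex mat" where
  "psum n X k = mat n n (\<lambda>(r,c). if r * n + c < k then X $$ (r,c) else 0)"

lemma rc_eq: "c < (n::nat) \<Longrightarrow> (r * n + c = k) = (r = k div n \<and> c = k mod n)"
proof
  assume c: "c < n" and k: "r * n + c = k"
  have "k div n = r" "k mod n = c" unfolding k[symmetric] using c by simp_all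
  then show "r = k div n \<and> c = k mod n" by simp
next
  assume "r = k div n \<and> c = k mod n"
  then show "r * n + c = k" by simp
qed

lemma psum_mspan:
  assumes "\<And>r c. r < n \<Longrightarrow> c < n \<Longrightarrow> emat n r c \<in> mspan n S"
  shows "psum n X k \<in> mspan n S"
proof (induction k)
  case 0
  have "psum n X 0 = 0\<^sub>m n n" by (auto simp: psum_def)
  then show ?case by (simp add: mzero)
next
  case (Suc k)
  show ?case
  proof (cases "k div n < n")
    case True
    have kn: "k mod n < n" using True by (cases "n = 0") auto
    have "psum n X (Suc k) = psum n X k + X $$ (k div n, k mod n) \<cdot>\<^sub>m emat n (k div n) (k mod n)"
    proof (rule eq_matI)
      fix i j assume "i < dim_row (psum n X k + X $$ (k div n, k mod n) \<cdot>\<^sub>m emat n (k div n) (k mod n))"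
        "j < dim_col (psum n X k + X $$ (k div n, k mod n) \<cdot>\<^sub>m emat n (k div n) (k mod n))"
      then have i: "i < n" and j: "j < n" by (auto simp: emat_def)
      have "(i * n + j < Suc k) = (i * n + j < k \<or> (i = k div n \<and> j = k mod n))"
        using rc_eq[OF j, of i k] by auto
      then show "psum n X (Suc k) $$ (i,j) = (psum n X k + X $$ (k div n, k mod n) \<cdot>\<^sub>m emat n (k div n) (k mod n)) $$ (i,j)"
        using i j by (auto simp: psum_def emat_def)
    qed (auto simp: psum_def emat_def)
    moreover have "emat n (k div n) (k mod n) \<in> mspan n S" using assms True kn by blast
    ultimately show ?thesis using Suc.IH by (auto intro!: madd msmul)
  next
    case False
    have "psum n X (Suc k) = psum n X k"
    proof (rule eq_matI)
      fix i j assume "i < dim_row (psum n X k)" "j < dim_col (psum n X k)"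
      then have i: "i < n" and j: "j < n" by (auto simp: psum_def)
      have "i * n + j \<noteq> k" using rc_eq[OF j, of i k] False i by auto
      then show "psum n X (Suc k) $$ (i,j) = psum n X k $$ (i,j)" using i j by (auto simp: psum_def)
    qed (auto simp: psum_def)
    then show ?thesis using Suc by simp
  qed
qed

lemma psum_full: "X \<in> carrier_mat n n \<Longrightarrow> psum n X (n * n) = X"
proof (rule eq_matI)
  fix i j assume X: "X \<in> carrier_mat n n" and "i < dim_row X" "j < dim_col X"
  then have i: "i < n" and j: "j < n" by auto
  have "i * n + j < (i + 1) * n" using j by simp
  also have "\<dots> \<le> n * n" using i by (intro mult_le_mono1) simp
  finally show "psum n X (n*n) $$ (i,j) = X $$ (i,j)" using i j by (simp add: psum_def)
qed (auto simp: psum_def)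

lemma carrier_RR_span:
  assumes X: "X \<in> carrier_mat (dimN p q) (dimN p q)"
  shows "X \<in> mspan (dimN p q) {RR p q k l |k l. k < dimN p q \<and> l < dimN p q}"
proof -
  have "psum (dimN p q) X (dimN p q * dimN p q) \<in> mspan (dimN p q) {RR p q k l |k l. k < dimN p q \<and> l < dimN p q}"
    by (rule psum_mspan) (rule emat_RR)
  then show ?thesis using psum_full[OF X] by simp
qed




definition hmat :: "nat \<Rightarrow> nat \<Rightarrow> complex mat \<Rightarrow> bool" where
  "hmat p q X = (even_mat p q X \<or> odd_mat p q X)"

lemma cartan_even: "H \<in> cartan p q \<Longrightarrow> even_mat p q H"
proof -
  assume H: "H \<in> cartan p q"
  obtain d s where hs: "\<forall>r<dimN p q. \<forall>c<dimN p q. H $$ (r,c) = hval p q d s r c"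
    and Hc: "H \<in> carrier_mat (dimN p q) (dimN p q)" using cartan_form[OF H] by blast
  show ?thesis unfolding even_mat_def
  proof (intro conjI allI impI Hc)
    fix r c assume r: "r < dimN p q" and c: "c < dimN p q" and ne: "idx_odd p r \<noteq> idx_odd p c"
    have "fi p q r \<noteq> fi p q c" using fi_facts(4)[OF r] fi_facts(4)[OF c] ne by metis
    then show "H $$ (r,c) = 0" using hs r c by (simp add: hval_def)
  qed
qed

lemma RR_hom: "k < dimN p q \<Longrightarrow> l < dimN p q \<Longrightarrow> hmat p q (RR p q k l)"
  using RR_even RR_odd unfolding hmat_def by blast

lemma even_add: "even_mat p q X \<Longrightarrow> even_mat p q Y \<Longrightarrow> even_mat p q (X + Y)"
  by (auto simp: even_mat_def)
lemma odd_add: "odd_mat p q X \<Longrightarrow> odd_mat p q Y \<Longrightarrow> odd_mat p q (X + Y)"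
  by (auto simp: odd_mat_def)

lemma RR_bar_hom:
  assumes k: "k < dimN p q" and l: "l < dimN p q"
  shows "hmat p q (RR p q k l + RR p q (dimN p q - 1 - k) (dimN p q - 1 - l))"
proof -
  have k': "dimN p q - 1 - k < dimN p q" and l': "dimN p q - 1 - l < dimN p q" using k by auto
  show ?thesis
  proof (cases "idx_odd p (a1 p q k) = idx_odd p (a1 p q l)")
    case True
    then show ?thesis unfolding hmat_def using RR_even[OF k l] RR_even[OF k' l'] slot_facts(6)[OF k] slot_facts(6)[OF l]
      by (auto intro: even_add)
  next
    case False
    then show ?thesis unfolding hmat_def using RR_odd[OF k l] RR_odd[OF k' l'] slot_facts(6)[OF k] slot_facts(6)[OF l]
      by (auto intro: odd_add)
  qed
qed

definition A1 where "A1 p q = {X. (X \<in> cartan p q \<or> neg_root_vec p q X) \<and> hmat p q X}"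
definition C1 where "C1 p q = {X \<in> kset p q. hmat p q X}"
definition A2 where "A2 p q = {X. neg_root_vec p q X \<and> hmat p q X}"
definition C2 where "C2 p q = {X. (X \<in> cartan p q \<or> pos_root_vec p q X) \<and> hmat p q X}"

lemma D1: "X \<in> carrier_mat (dimN p q) (dimN p q) \<Longrightarrow> X \<in> mspan (dimN p q) (A1 p q \<union> C1 p q)"
proof (rule mspan_trans[OF _ carrier_RR_span])
  show "{RR p q k l |k l. k < dimN p q \<and> l < dimN p q} \<subseteq> mspan (dimN p q) (A1 p q \<union> C1 p q)"
  proof safe
    fix k l assume k: "k < dimN p q" and l: "l < dimN p q"
    consider "l < k" | "k = l" | "k < l" by linarith
    then show "RR p q k l \<in> mspan (dimN p q) (A1 p q \<union> C1 p q)"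
    proof cases
      case 1 then show ?thesis using RR_neg[OF 1 k] RR_hom[OF k l] by (auto simp: A1_def intro: mgen)
    next
      case 2 then show ?thesis using RR_diag_cartan[OF k] RR_hom[OF k l] by (auto simp: A1_def intro: mgen)
    next
      case 3
      let ?k = "dimN p q - 1 - k" and ?l = "dimN p q - 1 - l"
      have k': "?k < dimN p q" and l': "?l < dimN p q" and lk: "?l < ?k" using k l 3 by auto
      have a: "RR p q k l + RR p q ?k ?l \<in> mspan (dimN p q) (A1 p q \<union> C1 p q)"
        using RR_kset[OF k l] RR_bar_hom[OF k l] by (auto simp: C1_def intro: mgen)
      have b: "RR p q ?k ?l \<in> mspan (dimN p q) (A1 p q \<union> C1 p q)"
        using RR_neg[OF lk k'] RR_hom[OF k' l'] by (auto simp: A1_def intro: mgen)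
      have "RR p q k l = (RR p q k l + RR p q ?k ?l) + (-1) \<cdot>\<^sub>m RR p q ?k ?l"
        by (rule eq_matI) auto
      then show ?thesis using a b by (metis madd msmul)
    qed
  qed
qed

lemma D2: "X \<in> carrier_mat (dimN p q) (dimN p q) \<Longrightarrow> X \<in> mspan (dimN p q) (A2 p q \<union> C2 p q)"
proof (rule mspan_trans[OF _ carrier_RR_span])
  show "{RR p q k l |k l. k < dimN p q \<and> l < dimN p q} \<subseteq> mspan (dimN p q) (A2 p q \<union> C2 p q)"
  proof safe
    fix k l assume k: "k < dimN p q" and l: "l < dimN p q"
    consider "l < k" | "k = l" | "k < l" by linarith
    then show "RR p q k l \<in> mspan (dimN p q) (A2 p q \<union> C2 p q)"
    proof cases
      case 1 then show ?thesis using RR_neg[OF 1 k] RR_hom[OF k l] by (auto simp: A2_def intro: mgen)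
    next
      case 2 then show ?thesis using RR_diag_cartan[OF k] RR_hom[OF k l] by (auto simp: C2_def intro: mgen)
    next
      case 3 then show ?thesis using RR_pos[OF 3 l] RR_hom[OF k l] by (auto simp: C2_def intro: mgen)
    qed
  qed
qed

lemma hom_carrier: "hmat p q X \<Longrightarrow> X \<in> carrier_mat (dimN p q) (dimN p q)"
  by (auto simp: hmat_def even_mat_def odd_mat_def)





inductive_set vspan :: "(complex \<Rightarrow> 'v \<Rightarrow> 'v) \<Rightarrow> 'v::ab_group_add set \<Rightarrow> 'v set" for sc S where
  vzero: "0 \<in> vspan sc S"
| vgen: "x \<in> S \<Longrightarrow> x \<in> vspan sc S"
| vadd: "x \<in> vspan sc S \<Longrightarrow> y \<in> vspan sc S \<Longrightarrow> x + y \<in> vspan sc S"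
| vsmul: "x \<in> vspan sc S \<Longrightarrow> sc c x \<in> vspan sc S"

lemma vspan_lin:
  assumes add: "\<And>x y. L (x + y) = L x + L y" and sm: "\<And>c x. L (sc c x) = sc' c (L x)"
    and gen: "\<And>x. x \<in> S \<Longrightarrow> L x \<in> vspan sc' T"
    and x: "x \<in> vspan sc S"
  shows "L x \<in> vspan sc' T"
  using x
proof (induction rule: vspan.induct)
  case vzero
  have "L 0 = L 0 + L 0" using add[of 0 0] by simp
  then have "L 0 = 0" by simp
  then show ?case by (simp add: vspan.vzero)
qed (auto simp: add sm gen intro: vspan.intros)

lemma vspan_trans: assumes "S \<subseteq> vspan sc T" "x \<in> vspan sc S" shows "x \<in> vspan sc T"
  using assms(2) by (induction rule: vspan.induct) (use assms(1) in \<open>auto intro: vspan.intros\<close>)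

lemma vspan_mono: assumes "S \<subseteq> T" "x \<in> vspan sc S" shows "x \<in> vspan sc T"
  using assms(2) by (induction rule: vspan.induct) (use assms(1) in \<open>auto intro: vspan.intros\<close>)

lemma vspan_fun:
  assumes add: "\<And>x y. f (x + y) = f x + f y" and sm: "\<And>c x. f (sc c x) = c * f x"
    and gen: "\<And>x. x \<in> S \<Longrightarrow> f x = (0::complex)"
    and x: "x \<in> vspan sc S"
  shows "f x = 0"
  using x
proof (induction rule: vspan.induct)
  case vzero
  have "f 0 = f 0 + f 0" using add[of 0 0] by simp
  then show ?case by simp
qed (auto simp: add sm gen)

fun wd :: "(complex mat \<Rightarrow> 'v \<Rightarrow> 'v) \<Rightarrow> complex mat list \<Rightarrow> 'v \<Rightarrow> 'v" where
  "wd act [] v = v"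
| "wd act (X # xs) v = act X (wd act xs v)"

locale gmod =
  fixes p q :: nat and sc :: "complex \<Rightarrow> 'v::ab_group_add \<Rightarrow> 'v" and V0 V1 :: "'v set"
    and act :: "complex mat \<Rightarrow> 'v \<Rightarrow> 'v"
  assumes gm: "gmodule p q sc V0 V1 act"
begin

lemma G: "vector_space sc" "is_subsp sc V0" "is_subsp sc V1" "V0 \<inter> V1 = {0}"
  "\<forall>v. \<exists>a\<in>V0. \<exists>b\<in>V1. v = a + b"
  "\<forall>X\<in>carrier_mat (dimN p q) (dimN p q).
        (\<forall>v w. act X (v + w) = act X v + act X w) \<and> (\<forall>c v. act X (sc c v) = sc c (act X v))"
  "\<forall>X\<in>carrier_mat (dimN p q) (dimN p q). \<forall>Y\<in>carrier_mat (dimN p q) (dimN p q). \<forall>v.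
        act (X + Y) v = act X v + act Y v"
  "\<forall>X\<in>carrier_mat (dimN p q) (dimN p q). \<forall>c v. act (c \<cdot>\<^sub>m X) v = sc c (act X v)"
  "\<forall>X. even_mat p q X \<longrightarrow> act X ` V0 \<subseteq> V0 \<and> act X ` V1 \<subseteq> V1"
  "\<forall>X. odd_mat p q X \<longrightarrow> act X ` V0 \<subseteq> V1 \<and> act X ` V1 \<subseteq> V0"
  "\<forall>a b X Y v. hom_mat p q a X \<longrightarrow> hom_mat p q b Y \<longrightarrow>
        (let \<sigma> = (if a \<and> b then -1 else 1 :: complex) in
         act (X * Y - \<sigma> \<cdot>\<^sub>m (Y * X)) v = act X (act Y v) - sc \<sigma> (act Y (act X v)))"
  by (insert gm[unfolded gmodule_def], elim conjE, assumption)+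

sublocale vector_space sc by (rule G(1))

lemma V0s: "is_subsp sc V0" and V1s: "is_subsp sc V1" and V01: "V0 \<inter> V1 = {0}"
  and dec: "\<And>v. \<exists>a\<in>V0. \<exists>b\<in>V1. v = a + b"
  using G(2-5) by blast+

lemma subsp_neg: "is_subsp sc W \<Longrightarrow> x \<in> W \<Longrightarrow> - x \<in> W"
  unfolding is_subsp_def by (metis scale_minus_left scale_one)
lemma subsp_diff: "is_subsp sc W \<Longrightarrow> x \<in> W \<Longrightarrow> y \<in> W \<Longrightarrow> x - y \<in> W"
  using subsp_neg[of W y] unfolding is_subsp_def by (metis diff_conv_add_uminus)
lemma subsp_add: "is_subsp sc W \<Longrightarrow> x \<in> W \<Longrightarrow> y \<in> W \<Longrightarrow> x + y \<in> W"
  unfolding is_subsp_def by blast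
lemma subsp_sc: "is_subsp sc W \<Longrightarrow> x \<in> W \<Longrightarrow> sc c x \<in> W"
  unfolding is_subsp_def by blast
lemma subsp_0: "is_subsp sc W \<Longrightarrow> 0 \<in> W"
  unfolding is_subsp_def by blast

lemma uniq:
  assumes "x0 \<in> V0" "y0 \<in> V0" "x1 \<in> V1" "y1 \<in> V1" "x0 + x1 = y0 + y1"
  shows "x0 = y0 \<and> x1 = y1"
proof -
  have "x0 - y0 = y1 - x1" using assms(5) by (simp add: algebra_simps)
  moreover have "x0 - y0 \<in> V0" using assms subsp_diff V0s by blast
  moreover have "y1 - x1 \<in> V1" using assms subsp_diff V1s by blast
  ultimately have "x0 - y0 = 0" using V01 by (metis IntI singletonD)
  then show ?thesis using assms(5) by simp
qed

lemma proj0_char: "a \<in> V0 \<Longrightarrow> v - a \<in> V1 \<Longrightarrow> proj0 V0 V1 v = a"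
  unfolding proj0_def
proof (rule the_equality)
  fix a' assume "a \<in> V0" "v - a \<in> V1" "a' \<in> V0 \<and> v - a' \<in> V1"
  then show "a' = a" using uniq[of a' a "v - a'" "v - a"] by auto
qed auto

lemma proj0_in: "proj0 V0 V1 v \<in> V0 \<and> v - proj0 V0 V1 v \<in> V1"
proof -
  obtain a b where "a \<in> V0" "b \<in> V1" "v = a + b" using dec by blast
  then show ?thesis using proj0_char[of a v] by auto
qed

lemma proj0_V0: "v \<in> V0 \<Longrightarrow> proj0 V0 V1 v = v"
  using proj0_char[of v v] subsp_0[OF V1s] by auto
lemma proj0_V1: "v \<in> V1 \<Longrightarrow> proj0 V0 V1 v = 0"
  using proj0_char[of 0 v] subsp_0[OF V0s] by auto

lemma proj0_add: "proj0 V0 V1 (x + y) = proj0 V0 V1 x + proj0 V0 V1 y"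
proof (rule proj0_char)
  show "proj0 V0 V1 x + proj0 V0 V1 y \<in> V0" using proj0_in subsp_add[OF V0s] by blast
  have "x + y - (proj0 V0 V1 x + proj0 V0 V1 y) = (x - proj0 V0 V1 x) + (y - proj0 V0 V1 y)"
    by (simp add: algebra_simps)
  then show "x + y - (proj0 V0 V1 x + proj0 V0 V1 y) \<in> V1" using proj0_in subsp_add[OF V1s] by metis
qed

lemma proj0_sc: "proj0 V0 V1 (sc c x) = sc c (proj0 V0 V1 x)"
proof (rule proj0_char)
  show "sc c (proj0 V0 V1 x) \<in> V0" using proj0_in subsp_sc[OF V0s] by blast
  have "sc c x - sc c (proj0 V0 V1 x) = sc c (x - proj0 V0 V1 x)" by (simp add: scale_right_diff_distrib)
  then show "sc c x - sc c (proj0 V0 V1 x) \<in> V1" using proj0_in subsp_sc[OF V1s] by metis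
qed

abbreviation "N \<equiv> dimN p q"
abbreviation "car \<equiv> carrier_mat (dimN p q) (dimN p q)"

lemma act_add: "X \<in> car \<Longrightarrow> act X (v + w) = act X v + act X w"
  using G(6) by blast
lemma act_sc: "X \<in> car \<Longrightarrow> act X (sc c v) = sc c (act X v)"
  using G(6) by blast
lemma act_madd: "X \<in> car \<Longrightarrow> Y \<in> car \<Longrightarrow> act (X + Y) v = act X v + act Y v"
  using G(7) by blast
lemma act_msc: "X \<in> car \<Longrightarrow> act (c \<cdot>\<^sub>m X) v = sc c (act X v)"
  using G(8) by blast
lemma act_even: "even_mat p q X \<Longrightarrow> act X ` V0 \<subseteq> V0 \<and> act X ` V1 \<subseteq> V1"
  using G(9) by blast
lemma act_odd: "odd_mat p q X \<Longrightarrow> act X ` V0 \<subseteq> V1 \<and> act X ` V1 \<subseteq> V0"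
  using G(10) by blast

lemma act_comm: "hom_mat p q a X \<Longrightarrow> hom_mat p q b Y \<Longrightarrow>
   act (X * Y - (if a \<and> b then -1 else 1) \<cdot>\<^sub>m (Y * X)) v = act X (act Y v) - sc (if a \<and> b then -1 else 1) (act Y (act X v))"
  using G(11) unfolding Let_def by blast

lemma act_0: "X \<in> car \<Longrightarrow> act X 0 = 0"
proof -
  assume X: "X \<in> car"
  have "act X 0 = act X 0 + act X 0" using act_add[OF X, of 0 0] by simp
  then show ?thesis by simp
qed

lemma act_zero_mat: "act (0\<^sub>m N N) v = 0"
proof -
  have "act (0 \<cdot>\<^sub>m 0\<^sub>m N N) v = sc 0 (act (0\<^sub>m N N) v)" by (rule act_msc) simp
  moreover have "(0::complex) \<cdot>\<^sub>m 0\<^sub>m N N = 0\<^sub>m N N" by (rule eq_matI) auto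
  ultimately show ?thesis by simp
qed

lemma act_minus: "X \<in> car \<Longrightarrow> act X (v - w) = act X v - act X w"
proof -
  assume X: "X \<in> car"
  have "act X (v - w) + act X w = act X v" using act_add[OF X, of "v - w" w] by simp
  then show ?thesis by (simp add: algebra_simps)
qed

lemma even_part_even: "even_mat p q (even_part p q X)"
  by (auto simp: even_mat_def even_part_def)
lemma odd_part_odd: "odd_mat p q (odd_part p q X)"
  by (auto simp: odd_mat_def odd_part_def)
lemma part_sum: "X \<in> car \<Longrightarrow> X = even_part p q X + odd_part p q X"
  by (rule eq_matI) (auto simp: even_part_def odd_part_def)
lemma even_parts: "even_mat p q X \<Longrightarrow> even_part p q X = X \<and> odd_part p q X = 0\<^sub>m N N"
  by (auto simp: even_mat_def even_part_def odd_part_def)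
lemma odd_parts: "odd_mat p q X \<Longrightarrow> even_part p q X = 0\<^sub>m N N \<and> odd_part p q X = X"
  by (auto simp: odd_mat_def even_part_def odd_part_def)

lemma act_split: "X \<in> car \<Longrightarrow> act X v = act (even_part p q X) v + act (odd_part p q X) v"
proof -
  assume X: "X \<in> car"
  have "act X v = act (even_part p q X + odd_part p q X) v" using part_sum[OF X] by simp
  also have "\<dots> = act (even_part p q X) v + act (odd_part p q X) v"
    by (rule act_madd) (auto simp: even_part_def odd_part_def)
  finally show ?thesis .
qed

lemma hom_homm: "hmat p q X \<Longrightarrow> \<exists>a. hom_mat p q a X"
  unfolding hmat_def hom_mat_def by (metis (full_types))

lemma hom_V: "hmat p q X \<Longrightarrow> v \<in> V0 \<union> V1 \<Longrightarrow> act X v \<in> V0 \<union> V1"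
  unfolding hmat_def using act_even act_odd by blast

lemma mspan_car: assumes "S \<subseteq> car" "X \<in> mspan N S" shows "X \<in> car"
  using assms(2) by (induction rule: mspan.induct) (use assms(1) in auto)

definition WN where "WN A v0 n = vspan sc {wd act bs v0 |bs. set bs \<subseteq> A \<and> length bs \<le> n}"

lemma WN_mono: "m \<le> n \<Longrightarrow> x \<in> WN A v0 m \<Longrightarrow> x \<in> WN A v0 n"
  unfolding WN_def by (erule vspan_mono[rotated]) auto

lemma WN_act:
  assumes a: "a \<in> A" and Ac: "A \<subseteq> car" and x: "x \<in> WN A v0 n"
  shows "act a x \<in> WN A v0 (Suc n)"
  unfolding WN_def
proof (rule vspan_lin[where L="act a", OF _ _ _ x[unfolded WN_def]])
  have ac: "a \<in> car" using a Ac by auto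
  show "act a (x + y) = act a x + act a y" for x y using act_add[OF ac] .
  show "act a (sc c x) = sc c (act a x)" for c x using act_sc[OF ac] .
  fix y assume "y \<in> {wd act bs v0 |bs. set bs \<subseteq> A \<and> length bs \<le> n}"
  then obtain bs where "y = wd act bs v0" "set bs \<subseteq> A" "length bs \<le> n" by blast
  then have "act a y \<in> {wd act bs v0 |bs. set bs \<subseteq> A \<and> length bs \<le> Suc n}"
    using a by (auto intro!: exI[of _ "a # bs"])
  then show "act a y \<in> vspan sc {wd act bs v0 |bs. set bs \<subseteq> A \<and> length bs \<le> Suc n}"
    by (rule vgen)
qed

lemma generic_step:
  assumes AC: "\<And>X. X \<in> A \<union> C \<Longrightarrow> hmat p q X"
    and span: "\<And>X. X \<in> car \<Longrightarrow> X \<in> mspan N (A \<union> C)"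
    and eig: "\<And>c. c \<in> C \<Longrightarrow> \<exists>\<mu>. act c v0 = sc \<mu> v0"
  shows "set as \<subseteq> A \<Longrightarrow> X \<in> car \<Longrightarrow> act X (wd act as v0) \<in> WN A v0 (Suc (length as))"
proof (induction as arbitrary: X)
  case Nil
  have ACc: "A \<union> C \<subseteq> car" using AC hom_carrier by blast
  have "X \<in> mspan N (A \<union> C)" using span Nil by blast
  then show ?case
  proof (induction rule: mspan.induct)
    case mzero then show ?case by (simp add: act_zero_mat WN_def vzero)
  next
    case (mgen Y)
    then show ?case
    proof
      assume "Y \<in> A"
      then show ?thesis unfolding WN_def by (intro vgen) (auto intro!: exI[of _ "[Y]"])
    next
      assume "Y \<in> C"
      then obtain \<mu> where "act Y v0 = sc \<mu> v0" using eig by blast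
      moreover have "v0 \<in> WN A v0 1" unfolding WN_def by (intro vgen) (auto intro!: exI[of _ "[]"])
      ultimately show ?thesis unfolding WN_def by (auto intro: vsmul)
    qed
  next
    case (madd X Y)
    then show ?case using act_madd mspan_car[OF ACc] unfolding WN_def by (auto intro: vadd)
  next
    case (msmul X c)
    then show ?case using act_msc mspan_car[OF ACc] unfolding WN_def by (auto intro: vsmul)
  qed
next
  case (Cons a as')
  have ACc: "A \<union> C \<subseteq> car" using AC hom_carrier by blast
  have aA: "a \<in> A" and as': "set as' \<subseteq> A" using Cons.prems by auto
  have ac: "a \<in> car" using aA ACc by auto
  define w' where "w' = wd act as' v0"
  have "X \<in> mspan N (A \<union> C)" using span Cons.prems by blast
  then show ?case
  proof (induction rule: mspan.induct)
    case mzero then show ?case by (simp add: act_zero_mat WN_def vzero)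
  next
    case (mgen Y)
    then show ?case
    proof
      assume "Y \<in> A"
      then show ?thesis unfolding WN_def using Cons.prems
        by (intro vgen) (auto intro!: exI[of _ "Y # a # as'"])
    next
      assume YC: "Y \<in> C"
      have Yc: "Y \<in> car" using YC ACc by auto
      obtain \<alpha> where ha: "hom_mat p q \<alpha> Y" using hom_homm AC YC by blast
      obtain \<beta> where hb: "hom_mat p q \<beta> a" using hom_homm AC aA by blast
      define \<sigma> :: complex where "\<sigma> = (if \<alpha> \<and> \<beta> then -1 else 1)"
      have com: "act (Y * a - \<sigma> \<cdot>\<^sub>m (a * Y)) w' = act Y (act a w') - sc \<sigma> (act a (act Y w'))"
        using act_comm[OF ha hb] unfolding \<sigma>_def .
      have 1: "act (Y * a - \<sigma> \<cdot>\<^sub>m (a * Y)) w' \<in> WN A v0 (Suc (length (a # as')))"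
      proof -
        have "Y * a - \<sigma> \<cdot>\<^sub>m (a * Y) \<in> car" using Yc ac by (auto intro!: minus_carrier_mat)
        then have "act (Y * a - \<sigma> \<cdot>\<^sub>m (a * Y)) w' \<in> WN A v0 (Suc (length as'))"
          using Cons.IH[OF as'] unfolding w'_def by blast
        then show ?thesis by (rule WN_mono[rotated]) simp
      qed
      have 2: "act a (act Y w') \<in> WN A v0 (Suc (length (a # as')))"
        using WN_act[OF aA _ Cons.IH[OF as' Yc]] ACc unfolding w'_def by auto
      have "act Y (act a w') = act (Y * a - \<sigma> \<cdot>\<^sub>m (a * Y)) w' + sc \<sigma> (act a (act Y w'))"
        using com by (simp add: algebra_simps)
      then show ?thesis using 1 2 unfolding WN_def w'_def by (auto intro: vadd vsmul)
    qed
  next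
    case (madd X Y)
    then show ?case using act_madd mspan_car[OF ACc] unfolding WN_def by (auto intro: vadd)
  next
    case (msmul X c)
    then show ?case using act_msc mspan_car[OF ACc] unfolding WN_def by (auto intro: vsmul)
  qed
qed

lemma generic:
  assumes AC: "\<And>X. X \<in> A \<union> C \<Longrightarrow> hmat p q X"
    and span: "\<And>X. X \<in> car \<Longrightarrow> X \<in> mspan N (A \<union> C)"
    and eig: "\<And>c. c \<in> C \<Longrightarrow> \<exists>\<mu>. act c v0 = sc \<mu> v0"
  shows "set bs \<subseteq> car \<Longrightarrow> wd act bs v0 \<in> vspan sc {wd act as v0 |as. set as \<subseteq> A}"
proof (induction bs)
  case Nil
  show ?case by (rule vgen) (auto intro!: exI[of _ "[]"])
next
  case (Cons X bs)
  have X: "X \<in> car" using Cons.prems by auto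
  have "act X (wd act bs v0) \<in> vspan sc {wd act as v0 |as. set as \<subseteq> A}"
  proof (rule vspan_lin[OF act_add[OF X] act_sc[OF X] _ Cons.IH])
    fix y assume "y \<in> {wd act as v0 |as. set as \<subseteq> A}"
    then obtain as where y: "y = wd act as v0" "set as \<subseteq> A" by blast
    have "act X y \<in> WN A v0 (Suc (length as))" using generic_step[OF AC span eig y(2) X] y(1) by simp
    then show "act X y \<in> vspan sc {wd act as v0 |as. set as \<subseteq> A}"
      unfolding WN_def by (rule vspan_mono[rotated]) auto
  qed (use Cons.prems in auto)
  then show ?case by simp
qed

end




context gmod
begin

lemma wd_add: "set bs \<subseteq> car \<Longrightarrow> wd act bs (x + y) = wd act bs x + wd act bs y"
  by (induction bs) (auto simp: act_add)
lemma wd_sc: "set bs \<subseteq> car \<Longrightarrow> wd act bs (sc c x) = sc c (wd act bs x)"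
  by (induction bs) (auto simp: act_sc)
lemma wd_append: "wd act (bs @ [X]) v = wd act bs (act X v)"
  by (induction bs) auto

lemma hom_wd: "set bs \<subseteq> Collect (hmat p q) \<Longrightarrow> v \<in> V0 \<union> V1 \<Longrightarrow> wd act bs v \<in> V0 \<union> V1"
proof (induction bs)
  case Nil then show ?case by simp
next
  case (Cons X bs) then show ?case using hom_V[of X "wd act bs v"] by simp
qed

lemma proj0_even: "even_mat p q X \<Longrightarrow> act X (proj0 V0 V1 y) = proj0 V0 V1 (act X y)"
proof -
  assume X: "even_mat p q X"
  have Xc: "X \<in> car" using X by (auto simp: even_mat_def)
  show ?thesis
  proof (rule proj0_char[symmetric])
    show "act X (proj0 V0 V1 y) \<in> V0" using act_even[OF X] proj0_in by blast
    have "act X y - act X (proj0 V0 V1 y) = act X (y - proj0 V0 V1 y)" using act_minus[OF Xc] by simp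
    then show "act X y - act X (proj0 V0 V1 y) \<in> V1" using act_even[OF X] proj0_in by auto
  qed
qed

lemma proj0_odd: "odd_mat p q X \<Longrightarrow> act X (proj0 V0 V1 y) = act X y - proj0 V0 V1 (act X y)"
proof -
  assume X: "odd_mat p q X"
  have Xc: "X \<in> car" using X by (auto simp: odd_mat_def)
  have "proj0 V0 V1 (act X y) = act X (y - proj0 V0 V1 y)"
  proof (rule proj0_char)
    show "act X (y - proj0 V0 V1 y) \<in> V0" using act_odd[OF X] proj0_in by blast
    have "act X y - act X (y - proj0 V0 V1 y) = act X (proj0 V0 V1 y)" using act_minus[OF Xc] by simp
    then show "act X y - act X (y - proj0 V0 V1 y) \<in> V1" using act_odd[OF X] proj0_in by auto
  qed
  then show ?thesis using act_minus[OF Xc] by simp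
qed

lemma wd_proj: "set bs \<subseteq> Collect (hmat p q) \<Longrightarrow>
  wd act bs (proj0 V0 V1 v) = proj0 V0 V1 (wd act bs v) \<or>
  wd act bs (proj0 V0 V1 v) = wd act bs v - proj0 V0 V1 (wd act bs v)"
proof (induction bs)
  case Nil then show ?case by simp
next
  case (Cons X bs)
  have hX: "hmat p q X" and bs: "set bs \<subseteq> Collect (hmat p q)" using Cons.prems by auto
  have Xc: "X \<in> car" using hX hom_carrier by blast
  define z where "z = wd act bs v"
  have IH: "wd act bs (proj0 V0 V1 v) = proj0 V0 V1 z \<or> wd act bs (proj0 V0 V1 v) = z - proj0 V0 V1 z"
    using Cons.IH[OF bs] unfolding z_def .
  show ?case unfolding wd.simps z_def[symmetric]
  proof (cases "even_mat p q X")
    case True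
    then show "act X (wd act bs (proj0 V0 V1 v)) = proj0 V0 V1 (act X z) \<or>
      act X (wd act bs (proj0 V0 V1 v)) = act X z - proj0 V0 V1 (act X z)"
      using IH proj0_even[OF True, of z] act_minus[OF Xc, of z] by auto
  next
    case False
    then have O: "odd_mat p q X" using hX by (simp add: hmat_def)
    show "act X (wd act bs (proj0 V0 V1 v)) = proj0 V0 V1 (act X z) \<or>
      act X (wd act bs (proj0 V0 V1 v)) = act X z - proj0 V0 V1 (act X z)"
      using IH proj0_odd[OF O, of z] act_minus[OF Xc, of z] by auto
  qed
qed

lemma main:
  fixes lam :: "complex mat \<Rightarrow> complex" and fm :: "'v \<Rightarrow> complex" and vk :: 'v
  assumes irr: "irreducible_gmod p q sc V0 V1 act"
    and hw: "\<exists>vp. vp \<noteq> 0 \<and> (\<forall>H\<in>cartan p q. act H vp = sc (lam H) vp)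
            \<and> (\<forall>X. pos_root_vec p q X \<longrightarrow> act X vp = 0)"
    and lin: "is_lin_fun sc fm"
    and dH: "\<forall>H\<in>cartan p q. dual_act p q V0 V1 act H fm = (\<lambda>v. - lam H * fm v)"
    and dN: "\<forall>X. neg_root_vec p q X \<longrightarrow> dual_act p q V0 V1 act X fm = (\<lambda>v. 0)"
    and gen: "\<forall>f. is_lin_fun sc f \<longrightarrow> f \<in> gen_dual p q sc V0 V1 act fm"
    and vk: "vk \<noteq> 0"
    and kinv: "\<forall>X\<in>kset p q. act X vk = 0"
  shows "fm vk \<noteq> 0"
proof
  assume fvk: "fm vk = 0"
  have fadd: "\<And>x y. fm (x + y) = fm x + fm y" and fsc: "\<And>c x. fm (sc c x) = c * fm x"
    using lin unfolding is_lin_fun_def by blast+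
  have f0: "fm 0 = 0" using fadd[of 0 0] by simp
  have fdiff: "\<And>x y. fm (x - y) = fm x - fm y"
    using fadd by (metis add_diff_cancel_right' diff_add_cancel eq_diff_eq)
  have p00: "proj0 V0 V1 0 = 0" using proj0_V0 subsp_0[OF V0s] by blast
  have F1a: "fm (act H v) = lam H * fm v" if H: "H \<in> cartan p q" for H v
  proof -
    have ev: "even_mat p q H" using cartan_even[OF H] .
    have "dual_act p q V0 V1 act H fm v = - lam H * fm v" using dH H by simp
    then show ?thesis unfolding dual_act_def using even_parts[OF ev] act_zero_mat p00 f0 by simp
  qed
  have F1b: "fm (act X v) = 0" if X: "neg_root_vec p q X" "hmat p q X" for X v
  proof (cases "even_mat p q X")
    case True
    have "dual_act p q V0 V1 act X fm v = 0" using dN X by simp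
    then show ?thesis unfolding dual_act_def using even_parts[OF True] act_zero_mat p00 f0 by simp
  next
    case False
    then have O: "odd_mat p q X" using X by (simp add: hmat_def)
    have Xc: "X \<in> car" using O by (auto simp: odd_mat_def)
    have d: "- fm (proj0 V0 V1 (act X w)) + fm (act X w - proj0 V0 V1 (act X w)) = 0" for w
    proof -
      have "dual_act p q V0 V1 act X fm w = 0" using dN X by simp
      then show ?thesis unfolding dual_act_def using odd_parts[OF O] act_zero_mat f0 by simp
    qed
    obtain a b where ab: "a \<in> V0" "b \<in> V1" "v = a + b" using dec by blast
    have "act X a \<in> V1" "act X b \<in> V0" using act_odd[OF O] ab by auto
    then have "fm (act X a) = 0" "fm (act X b) = 0"
      using d[of a] d[of b] proj0_V1 proj0_V0 f0 by auto
    then show ?thesis using ab act_add[OF Xc] fadd by simp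
  qed
  have F1w: "fm (wd act cs vk) = 0" if "set cs \<subseteq> A1 p q" for cs
    using that
  proof (induction cs)
    case Nil then show ?case using fvk by simp
  next
    case (Cons X cs)
    then have X: "X \<in> A1 p q" and IH: "fm (wd act cs vk) = 0" by auto
    show ?case using X IH F1a F1b by (auto simp: A1_def)
  qed
  have fnz: "\<exists>v. fm v \<noteq> 0"
  proof (rule ccontr)
    assume "\<not> (\<exists>v. fm v \<noteq> 0)"
    then have z: "\<forall>v. fm v = 0" by blast
    have gz: "\<forall>v. g v = 0" if "g \<in> gen_dual p q sc V0 V1 act fm" for g
      using that by (induction rule: gen_dual.induct) (auto simp: z dual_act_def)
    obtain v0 :: 'v where v0: "v0 \<noteq> 0" using irr unfolding irreducible_gmod_def by blast
    have ind: "independent {v0}"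
      using v0 independent_empty by (intro independent_insertI) auto
    define B where "B = extend_basis {v0}"
    have iB: "independent B" and sB: "span B = UNIV" and v0B: "v0 \<in> B"
      using independent_extend_basis[OF ind] span_extend_basis[OF ind] extend_basis_superset[OF ind]
      unfolding B_def by auto
    define f where "f v = representation B v v0" for v
    have "is_lin_fun sc f" unfolding is_lin_fun_def f_def
      using representation_add[OF iB] representation_scale[OF iB] sB by auto
    then have "f \<in> gen_dual p q sc V0 V1 act fm" using gen by blast
    then have "f v0 = 0" using gz by blast
    moreover have "f v0 = 1" unfolding f_def using representation_basis[OF iB v0B] by simp
    ultimately show False by simp
  qed
  obtain vp where vp: "vp \<noteq> 0" "\<forall>H\<in>cartan p q. act H vp = sc (lam H) vp"
      "\<forall>X. pos_root_vec p q X \<longrightarrow> act X vp = 0" using hw by blast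
  obtain a b where ab: "a \<in> V0" "b \<in> V1" "vp = a + b" using dec by blast
  have eigab: "(\<exists>\<mu>. act X a = sc \<mu> a) \<and> (\<exists>\<mu>. act X b = sc \<mu> b)" if X: "X \<in> C2 p q" for X
  proof -
    have hX: "hmat p q X" using X by (simp add: C2_def)
    have Xc: "X \<in> car" using hX hom_carrier by blast
    show ?thesis
    proof (cases "X \<in> cartan p q")
      case True
      have ev: "even_mat p q X" using cartan_even[OF True] .
      have "act X a + act X b = sc (lam X) a + sc (lam X) b"
      proof -
        have "act X vp = sc (lam X) vp" using vp(2) True by blast
        then show ?thesis using ab(3) act_add[OF Xc, of a b] by (simp add: scale_right_distrib)
      qed
      moreover have "act X a \<in> V0" "act X b \<in> V1" using act_even[OF ev] ab by auto
      moreover have "sc (lam X) a \<in> V0" "sc (lam X) b \<in> V1" using ab subsp_sc V0s V1s by blast+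
      ultimately have "act X a = sc (lam X) a \<and> act X b = sc (lam X) b" using uniq by blast
      then show ?thesis by blast
    next
      case False
      then have pr: "pos_root_vec p q X" using X by (simp add: C2_def)
      have "act X vp = 0" using vp(3) pr by blast
      then have s0: "act X a + act X b = 0" using ab(3) act_add[OF Xc, of a b] by simp
      have "act X a = 0 \<and> act X b = 0"
      proof (cases "even_mat p q X")
        case True
        have "act X a \<in> V0" "act X b \<in> V1" using act_even[OF True] ab by auto
        then show ?thesis using uniq[of "act X a" 0 "act X b" 0] s0 subsp_0[OF V0s] subsp_0[OF V1s] by auto
      next
        case False
        then have O: "odd_mat p q X" using hX by (simp add: hmat_def)
        have "act X a \<in> V1" "act X b \<in> V0" using act_odd[OF O] ab by auto
        then show ?thesis using uniq[of "act X b" 0 "act X a" 0] s0 subsp_0[OF V0s] subsp_0[OF V1s]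
          by (auto simp: add.commute)
      qed
      then show ?thesis by (metis scale_zero_left)
    qed
  qed
  obtain vq where vq: "vq \<noteq> 0" "vq \<in> V0 \<union> V1" "\<And>X. X \<in> C2 p q \<Longrightarrow> \<exists>\<mu>. act X vq = sc \<mu> vq"
  proof (cases "a = 0")
    case True
    then have "b \<noteq> 0" using vp(1) ab by simp
    then show ?thesis using that[of b] ab eigab by blast
  next
    case False
    then show ?thesis using that[of a] ab eigab by blast
  qed
  define M2 where "M2 = vspan sc {wd act bs vq |bs. set bs \<subseteq> Collect (hmat p q)}"
  have M2sub: "is_subsp sc M2" unfolding is_subsp_def M2_def by (auto intro: vspan.intros)
  have M2act: "act X ` M2 \<subseteq> M2" if Xc: "X \<in> car" for X
  proof
    fix y assume "y \<in> act X ` M2"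
    then obtain x where x: "x \<in> M2" "y = act X x" by blast
    have "act X x \<in> M2" unfolding M2_def
    proof (rule vspan_lin[OF act_add[OF Xc] act_sc[OF Xc] _ x(1)[unfolded M2_def]])
      fix g assume "g \<in> {wd act bs vq |bs. set bs \<subseteq> Collect (hmat p q)}"
      then obtain bs where g: "g = wd act bs vq" "set bs \<subseteq> Collect (hmat p q)" by blast
      have h1: "hmat p q (even_part p q X)" "hmat p q (odd_part p q X)"
        using even_part_even odd_part_odd by (auto simp: hmat_def)
      have "act X g = wd act (even_part p q X # bs) vq + wd act (odd_part p q X # bs) vq"
        using act_split[OF Xc] g by simp
      moreover have "wd act (even_part p q X # bs) vq \<in> vspan sc {wd act bs vq |bs. set bs \<subseteq> Collect (hmat p q)}"
        using h1 g by (intro vgen) (auto intro!: exI[of _ "even_part p q X # bs"])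
      moreover have "wd act (odd_part p q X # bs) vq \<in> vspan sc {wd act bs vq |bs. set bs \<subseteq> Collect (hmat p q)}"
        using h1 g by (intro vgen) (auto intro!: exI[of _ "odd_part p q X # bs"])
      ultimately show "act X g \<in> vspan sc {wd act bs vq |bs. set bs \<subseteq> Collect (hmat p q)}"
        by (auto intro: vadd)
    qed
    then show "y \<in> M2" using x by simp
  qed
  have M2proj: "proj0 V0 V1 w \<in> M2" if w: "w \<in> M2" for w
    unfolding M2_def
  proof (rule vspan_lin[OF proj0_add proj0_sc _ w[unfolded M2_def]])
    fix g assume "g \<in> {wd act bs vq |bs. set bs \<subseteq> Collect (hmat p q)}"
    then obtain bs where g: "g = wd act bs vq" "set bs \<subseteq> Collect (hmat p q)" by blast
    have "g \<in> V0 \<union> V1" using hom_wd[OF g(2) vq(2)] g(1) by simp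
    then show "proj0 V0 V1 g \<in> vspan sc {wd act bs vq |bs. set bs \<subseteq> Collect (hmat p q)}"
    proof
      assume "g \<in> V0" then show ?thesis using proj0_V0 g by (auto intro!: vgen)
    next
      assume "g \<in> V1" then show ?thesis using proj0_V1 by (simp add: vzero)
    qed
  qed
  have vqM2: "vq \<in> M2" unfolding M2_def by (rule vgen) (auto intro!: exI[of _ "[]"])
  have M2U: "M2 = UNIV"
    using irr M2sub M2act M2proj vqM2 vq(1) unfolding irreducible_gmod_def by blast
  have AC2: "\<And>X. X \<in> A2 p q \<union> C2 p q \<Longrightarrow> hmat p q X" by (auto simp: A2_def C2_def)
  have gen2: "wd act bs vq \<in> vspan sc {wd act as vq |as. set as \<subseteq> A2 p q}" if "set bs \<subseteq> car" for bs
    by (rule generic[OF AC2 D2 vq(3) that])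
  have allW2: "v \<in> vspan sc {wd act as vq |as. set as \<subseteq> A2 p q}" for v
  proof -
    have "v \<in> M2" using M2U by simp
    then show ?thesis unfolding M2_def
      by (rule vspan_trans[rotated]) (use gen2 hom_carrier in blast)
  qed
  define e where "e = (vq \<in> V0)"
  have F2: "fm (proj0 V0 V1 v) = (if e then fm v else 0)" for v
  proof -
    have "fm (proj0 V0 V1 v) - (if e then fm v else 0) = 0"
    proof (rule vspan_fun[OF _ _ _ allW2[of v]])
      show "fm (proj0 V0 V1 (x + y)) - (if e then fm (x + y) else 0) =
        (fm (proj0 V0 V1 x) - (if e then fm x else 0)) + (fm (proj0 V0 V1 y) - (if e then fm y else 0))" for x y
        by (simp add: proj0_add fadd)
      show "fm (proj0 V0 V1 (sc c x)) - (if e then fm (sc c x) else 0) =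
        c * (fm (proj0 V0 V1 x) - (if e then fm x else 0))" for c x
        by (simp add: proj0_sc fsc algebra_simps)
      fix g assume "g \<in> {wd act as vq |as. set as \<subseteq> A2 p q}"
      then obtain cs where g: "g = wd act cs vq" "set cs \<subseteq> A2 p q" by blast
      have hc: "set cs \<subseteq> Collect (hmat p q)" using g(2) by (auto simp: A2_def)
      have gV: "g \<in> V0 \<union> V1" using hom_wd[OF hc vq(2)] g(1) by simp
      show "fm (proj0 V0 V1 g) - (if e then fm g else 0) = 0"
      proof (cases cs)
        case Nil
        then have "g = vq" using g by simp
        then show ?thesis using vq(2) proj0_V0 proj0_V1 f0 unfolding e_def by auto
      next
        case (Cons X cs')
        then have X: "neg_root_vec p q X" "hmat p q X" using g(2) by (auto simp: A2_def)
        have "fm g = 0" using F1b[OF X] g(1) Cons by simp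
        moreover have "proj0 V0 V1 g = g \<or> proj0 V0 V1 g = 0" using gV proj0_V0 proj0_V1 by blast
        ultimately show ?thesis using f0 by auto
      qed
    qed
    then show ?thesis by simp
  qed
  define W where "W = {v. \<forall>bs. set bs \<subseteq> Collect (hmat p q) \<longrightarrow> fm (wd act bs v) = 0}"
  have hcar: "set bs \<subseteq> Collect (hmat p q) \<Longrightarrow> set bs \<subseteq> car" for bs using hom_carrier by blast
  have Wsub: "is_subsp sc W" unfolding is_subsp_def W_def
  proof (intro conjI ballI allI impI CollectI)
    fix bs :: "complex mat list" assume bs: "set bs \<subseteq> Collect (hmat p q)"
    have "wd act bs 0 = wd act bs 0 + wd act bs 0" using wd_add[OF hcar[OF bs], of 0 0] by simp
    then show "fm (wd act bs 0) = 0" using f0 by simp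
  next
    fix x y bs assume x: "x \<in> {v. \<forall>bs. set bs \<subseteq> Collect (hmat p q) \<longrightarrow> fm (wd act bs v) = 0}"
      and y: "y \<in> {v. \<forall>bs. set bs \<subseteq> Collect (hmat p q) \<longrightarrow> fm (wd act bs v) = 0}"
      and bs: "set bs \<subseteq> Collect (hmat p q)"
    show "fm (wd act bs (x + y)) = 0" using x y bs wd_add[OF hcar[OF bs]] fadd by simp
  next
    fix c x bs assume x: "x \<in> {v. \<forall>bs. set bs \<subseteq> Collect (hmat p q) \<longrightarrow> fm (wd act bs v) = 0}"
      and bs: "set bs \<subseteq> Collect (hmat p q)"
    show "fm (wd act bs (sc c x)) = 0" using x bs wd_sc[OF hcar[OF bs]] fsc by simp
  qed
  have Wact: "act X ` W \<subseteq> W" if Xc: "X \<in> car" for X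
  proof
    fix y assume "y \<in> act X ` W"
    then obtain x where x: "x \<in> W" "y = act X x" by blast
    have h1: "hmat p q (even_part p q X)" "hmat p q (odd_part p q X)"
      using even_part_even odd_part_odd by (auto simp: hmat_def)
    show "y \<in> W" unfolding W_def
    proof (intro CollectI allI impI)
      fix bs assume bs: "set bs \<subseteq> Collect (hmat p q)"
      have "wd act bs y = wd act (bs @ [even_part p q X]) x + wd act (bs @ [odd_part p q X]) x"
        unfolding wd_append x(2) using act_split[OF Xc] wd_add[OF hcar[OF bs]] by simp
      moreover have "fm (wd act (bs @ [even_part p q X]) x) = 0" "fm (wd act (bs @ [odd_part p q X]) x) = 0"
        using x(1) bs h1 unfolding W_def by auto
      ultimately show "fm (wd act bs y) = 0" using fadd by simp
    qed
  qed
  have Wproj: "proj0 V0 V1 w \<in> W" if w: "w \<in> W" for w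
    unfolding W_def
  proof (intro CollectI allI impI)
    fix bs assume bs: "set bs \<subseteq> Collect (hmat p q)"
    have z: "fm (wd act bs w) = 0" using w bs unfolding W_def by blast
    have pz: "fm (proj0 V0 V1 (wd act bs w)) = 0" using F2 z by simp
    show "fm (wd act bs (proj0 V0 V1 w)) = 0"
      using wd_proj[OF bs, of w] z pz fdiff by auto
  qed
  have WU: "W = {0} \<or> W = UNIV"
    using irr Wsub Wact Wproj unfolding irreducible_gmod_def by blast
  have "W \<noteq> UNIV"
  proof
    assume "W = UNIV"
    obtain v where "fm v \<noteq> 0" using fnz by blast
    moreover have "v \<in> W" using \<open>W = UNIV\<close> by simp
    moreover have "\<forall>bs. set bs \<subseteq> Collect (hmat p q) \<longrightarrow> fm (wd act bs v) = 0"
      using \<open>v \<in> W\<close> unfolding W_def by blast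
    ultimately show False by (metis empty_subsetI empty_set wd.simps(1))
  qed
  then have W0: "W = {0}" using WU by blast
  have AC1: "\<And>X. X \<in> A1 p q \<union> C1 p q \<Longrightarrow> hmat p q X" by (auto simp: A1_def C1_def)
  have eig1: "\<And>c. c \<in> C1 p q \<Longrightarrow> \<exists>\<mu>. act c vk = sc \<mu> vk"
    using kinv by (auto simp: C1_def intro!: exI[of _ 0])
  have "vk \<in> W" unfolding W_def
  proof (intro CollectI allI impI)
    fix bs assume bs: "set bs \<subseteq> Collect (hmat p q)"
    have "wd act bs vk \<in> vspan sc {wd act as vk |as. set as \<subseteq> A1 p q}"
      by (rule generic[OF AC1 D1 eig1 hcar[OF bs]])
    then show "fm (wd act bs vk) = 0"
      by (rule vspan_fun[OF fadd fsc, rotated]) (use F1w in blast)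
  qed
  then show False using W0 vk by simp
qed

end


theorem propositionA1:
  fixes p q :: nat
    and sc :: "complex \<Rightarrow> 'v::ab_group_add \<Rightarrow> 'v"
    and V0 V1 :: "'v set"
    and act :: "complex mat \<Rightarrow> 'v \<Rightarrow> 'v"
    and lam :: "complex mat \<Rightarrow> complex"
    and fm :: "'v \<Rightarrow> complex"
    and vk :: 'v
  assumes "p \<ge> 1" and "q \<ge> 1"
    and "gmodule p q sc V0 V1 act"
    and "irreducible_gmod p q sc V0 V1 act"
    and "\<exists>vp. vp \<noteq> 0 \<and> (\<forall>H\<in>cartan p q. act H vp = sc (lam H) vp)
            \<and> (\<forall>X. pos_root_vec p q X \<longrightarrow> act X vp = 0)"
    and "is_lin_fun sc fm"
    and "\<forall>H\<in>cartan p q. dual_act p q V0 V1 act H fm = (\<lambda>v. - lam H * fm v)"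
    and "\<forall>X. neg_root_vec p q X \<longrightarrow> dual_act p q V0 V1 act X fm = (\<lambda>v. 0)"
    and "\<forall>f. is_lin_fun sc f \<longrightarrow> f \<in> gen_dual p q sc V0 V1 act fm"
    and "vk \<noteq> 0"
    and "\<forall>X\<in>kset p q. act X vk = 0"
  shows "fm vk \<noteq> 0"
proof -
  interpret gmod p q sc V0 V1 act by unfold_locales (rule assms(3))
  show ?thesis by (rule main[OF assms(4-11)])
qed

end
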